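(* Let $X_1, X_2, \dots$ be i.i.d. random variables with the exponential distribution with density $f(x)=\lambda e^{-\lambda x}$, $x\ge 0$, for some $\lambda>0$. For $n\ge 2$ let $F_n(t)=n^{-1}\sum_{i=1}^n \mathbf{1}\{X_i<t\}$ be the empirical distribution function of $X_1,\dots,X_n$, let $$H_n(t)=\binom{n}{2}^{-1}\sum_{1\le i<j\le n}\mathbf{1}\{2\min(X_i,X_j)<t\},\qquad t\ge 0,$$ and let $$I_n=\int_0^\infty \big(F_n(t)-H_n(t)\big)\,dF_n(t).$$ Then, as $n\to\infty$, $$\sqrt{n}\, I_n \xrightarrow{d} \mathcal{N}(0,9\Delta^2),\qquad \text{where } \Delta^2=\frac{11}{3780},$$ i.e. the limiting normal distribution has mean $0$ and variance $9\cdot\frac{11}{3780}=\frac{11}{420}$.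
   Context: $\Delta^2$ is the variance of the projection $\psi(s)=\frac13 e^{-s}-\frac1{18}-\frac49 e^{-3s}$ (taken under the standard exponential law) of the centered degree-3 kernel $\Psi(X,Y,Z)=\frac12-\frac13\big[\mathbf{1}\{2\min(X,Y)<Z\}+\mathbf{1}\{2\min(Y,Z)<X\}+\mathbf{1}\{2\min(X,Z)<Y\}\big]$, to whose $U$-statistic $I_n$ is asymptotically equivalent; the distribution of $I_n$ does not depend on $\lambda$. *)

theory Defs
  imports "HOL-Probability.Probability"
begin

definition emp_cdf :: "(nat \<Rightarrow> real) \<Rightarrow> nat \<Rightarrow> real \<Rightarrow> real" where
  "emp_cdf x n t = (\<Sum>i<n. if x i < t then 1 else 0) / real n"

definition H_stat :: "(nat \<Rightarrow> real) \<Rightarrow> nat \<Rightarrow> real \<Rightarrow> real" where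
  "H_stat x n t = (\<Sum>j<n. \<Sum>i<j. if 2 * min (x i) (x j) < t then 1 else 0) / real (n choose 2)"

definition emp_measure :: "(nat \<Rightarrow> real) \<Rightarrow> nat \<Rightarrow> real measure" where
  "emp_measure x n = measure_pmf (pmf_of_multiset (mset (map x [0..<n])))"

definition I_stat :: "(nat \<Rightarrow> real) \<Rightarrow> nat \<Rightarrow> real" where
  "I_stat x n = (LINT t:{0..}|emp_measure x n. emp_cdf x n t - H_stat x n t)"

end

theory Submission
  imports Defs "HOL-Real_Asymp.Real_Asymp"
begin

definition ee :: "real \<Rightarrow> real \<Rightarrow> real" where "ee c y = exp (- c * max 0 y)"

lemma ee_meas[measurable]: "ee c \<in> borel_measurable borel"
  unfolding ee_def by measurable

lemma ee_bounds: "0 \<le> c \<Longrightarrow> 0 < ee c y \<and> ee c y \<le> 1"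
  unfolding ee_def by (auto simp: mult_nonneg_nonneg)

lemma int_expdens: "0 < k \<Longrightarrow> integral\<^sup>L lborel (exponential_density k) = 1"
proof -
  assume k: "0 < k"
  interpret P: prob_space "density lborel (exponential_density k)"
    by (rule prob_space_exponential_density[OF k])
  have "integral\<^sup>L (density lborel (exponential_density k)) (\<lambda>_. 1::real) = 1"
    using P.prob_space by simp
  moreover have "integral\<^sup>L (density lborel (exponential_density k)) (\<lambda>_. 1::real) = integral\<^sup>L lborel (exponential_density k)"
    using k by (subst integral_density) (auto simp: exponential_density_nonneg)
  ultimately show ?thesis by simp
qed

locale ES = prob_space M for M :: "'a measure" +
  fixes X :: "nat \<Rightarrow> 'a \<Rightarrow> real" and l :: real
  assumes l_pos: "0 < l"
    and indep: "indep_vars (\<lambda>i. borel) X UNIV"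
    and distrX: "\<And>i. distributed M lborel (X i) (exponential_density l)"
begin

definition mu :: "real measure" where "mu = density lborel (exponential_density l)"

lemma X_meas[measurable]: "X i \<in> borel_measurable M"
  using indep unfolding indep_vars_def2 by simp

lemma distr_X: "distr M borel (X i) = mu"
proof -
  have "distr M borel (X i) = distr M lborel (X i)"
    by (rule distr_cong) auto
  also have "\<dots> = mu" unfolding mu_def using distributed_distr_eq_density[OF distrX] .
  finally show ?thesis .
qed

lemma mu_prob: "prob_space mu"
  unfolding mu_def using prob_space_exponential_density[OF l_pos] .

lemma sets_mu[simp, measurable_cong]: "sets mu = sets borel"
  unfolding mu_def by simp

lemma space_mu[simp]: "space mu = UNIV"
  unfolding mu_def by simp

lemma EX: "(f::real\<Rightarrow>real) \<in> borel_measurable borel \<Longrightarrow> expectation (\<lambda>\<omega>. f (X i \<omega>)) = integral\<^sup>L mu f"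
proof -
  assume f: "f \<in> borel_measurable borel"
  have "integral\<^sup>L mu f = integral\<^sup>L (distr M borel (X i)) f" by (simp add: distr_X)
  also have "\<dots> = expectation (\<lambda>\<omega>. f (X i \<omega>))" using f by (intro integral_distr[of "X i" M borel f]) auto
  finally show ?thesis by simp
qed

lemma AE_mu_nonneg: "AE y in mu. 0 \<le> y"
  unfolding mu_def by (subst AE_density) (auto simp: exponential_density_def)

lemma AE_mu_neq: "AE y in mu. y \<noteq> a"
  unfolding mu_def by (subst AE_density) (auto intro: AE_mp[OF AE_lborel_singleton[of a]])

lemma int_mu: "(f::real\<Rightarrow>real) \<in> borel_measurable borel \<Longrightarrow> integral\<^sup>L mu f = (\<integral>y. exponential_density l y * f y \<partial>lborel)"
  unfolding mu_def using l_pos by (subst integral_density) (auto simp: exponential_density_nonneg)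

lemma mu_ee: assumes c: "0 \<le> c" shows "integral\<^sup>L mu (ee c) = l / (l + c)"
proof -
  have "integral\<^sup>L mu (ee c) = (\<integral>y. exponential_density l y * ee c y \<partial>lborel)"
    by (rule int_mu) simp
  also have "\<dots> = (\<integral>y. l / (l + c) * exponential_density (l + c) y \<partial>lborel)"
  proof (rule Bochner_Integration.integral_cong[OF refl])
    fix y
    show "exponential_density l y * ee c y = l / (l + c) * exponential_density (l + c) y"
    proof (cases "y < 0")
      case True then show ?thesis by (simp add: exponential_density_def)
    next
      case False
      have e: "exp (- y * l) * exp (- c * y) = exp (- y * (l + c))"
        by (simp add: exp_add[symmetric] algebra_simps)
      have "l + c > 0" using l_pos c by simp
      then show ?thesis using False e
        by (simp add: exponential_density_def ee_def max_def field_simps)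
    qed
  qed
  also have "\<dots> = l / (l + c)"
    using l_pos c by (simp add: int_expdens)
  finally show ?thesis .
qed

lemma mu_tail:
  assumes a: "0 \<le> a" and f[measurable]: "(f::real\<Rightarrow>real) \<in> borel_measurable borel"
  shows "(\<integral>y. indicator {a..} y * f y \<partial>mu) = exp (- a * l) * (\<integral>u. f (a + u) \<partial>mu)"
proof -
  have "(\<integral>y. indicator {a..} y * f y \<partial>mu) = (\<integral>y. exponential_density l y * (indicator {a..} y * f y) \<partial>lborel)"
    by (rule int_mu) simp
  also have "\<dots> = (\<integral>u. exponential_density l (a + 1 * u) * (indicator {a..} (a + 1 * u) * f (a + 1 * u)) \<partial>lborel)"
    using lborel_integral_real_affine[of 1 "\<lambda>y. exponential_density l y * (indicator {a..} y * f y)" a] by simp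
  also have "\<dots> = (\<integral>u. exp (- a * l) * (exponential_density l u * f (a + u)) \<partial>lborel)"
  proof (rule Bochner_Integration.integral_cong[OF refl])
    fix u
    show "exponential_density l (a + 1 * u) * (indicator {a..} (a + 1 * u) * f (a + 1 * u)) = exp (- a * l) * (exponential_density l u * f (a + u))"
    proof (cases "u < 0")
      case True then show ?thesis by (simp add: exponential_density_def indicator_def)
    next
      case False
      have e: "exp (- (a + u) * l) = exp (- a * l) * exp (- u * l)"
        by (simp add: exp_add[symmetric] algebra_simps)
      show ?thesis using False a e by (simp add: exponential_density_def indicator_def)
    qed
  qed
  also have "\<dots> = exp (- a * l) * (\<integral>u. exponential_density l u * f (a + u) \<partial>lborel)"
    by simp
  also have "(\<integral>u. exponential_density l u * f (a + u) \<partial>lborel) = (\<integral>u. f (a + u) \<partial>mu)"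
    by (rule int_mu[symmetric]) simp
  finally show ?thesis .
qed

lemma mu_ge: "0 \<le> a \<Longrightarrow> (\<integral>y. indicator {a..} y \<partial>mu) = exp (- a * l)"
proof -
  assume a: "0 \<le> a"
  have one: "(\<integral>u. 1 \<partial>mu) = (1::real)"
    using prob_space.prob_space[OF mu_prob] by simp
  have m: "(\<lambda>_. 1::real) \<in> borel_measurable borel" by simp
  show ?thesis using mu_tail[OF a m] by (simp only: one mult_1_right)
qed

lemma mu_gt: "0 \<le> a \<Longrightarrow> (\<integral>y. indicator {a<..} y \<partial>mu) = exp (- a * l)"
proof -
  assume a: "0 \<le> a"
  have ae: "AE y in mu. indicator {a<..} y = (indicator {a..} y :: real)"
    using AE_mu_neq[of a] by eventually_elim (auto simp: indicator_def)
  have "(\<integral>y. indicator {a<..} y \<partial>mu) = (\<integral>y. indicator {a..} y \<partial>mu :: real)"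
    by (rule integral_cong_AE) (use ae in auto)
  then show ?thesis using mu_ge[OF a] by simp
qed

lemma FE:
  fixes G :: "real \<Rightarrow> (nat \<Rightarrow> real) \<Rightarrow> real"
  assumes A: "finite A" "m \<notin> A"
    and G[measurable]: "(\<lambda>p. G (fst p) (snd p)) \<in> borel_measurable (borel \<Otimes>\<^sub>M PiM A (\<lambda>_. borel))"
    and B: "\<And>x v. \<bar>G x v\<bar> \<le> B"
  shows "expectation (\<lambda>\<omega>. G (X m \<omega>) (restrict (\<lambda>i. X i \<omega>) A))
       = (\<integral>x. expectation (\<lambda>\<omega>. G x (restrict (\<lambda>i. X i \<omega>) A)) \<partial>mu)"
proof -
  define V where "V = (\<lambda>\<omega>. restrict (\<lambda>i. X i \<omega>) A)"
  define W where "W = (\<lambda>\<omega>. restrict (\<lambda>i. X i \<omega>) {m})"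
  have V[measurable]: "V \<in> measurable M (PiM A (\<lambda>_. borel))"
    unfolding V_def by measurable
  have W[measurable]: "W \<in> measurable M (PiM {m} (\<lambda>_. borel))"
    unfolding W_def by measurable
  have ind: "indep_var (PiM {m} (\<lambda>_. borel)) W (PiM A (\<lambda>_. borel)) V"
    unfolding V_def W_def using A by (intro indep_var_restrict[OF indep]) auto
  define nu where "nu = distr M (PiM A (\<lambda>_. borel)) V"
  define rho where "rho = distr M (PiM {m} (\<lambda>_. borel)) W"
  interpret nu: prob_space nu unfolding nu_def by (rule prob_space_distr) simp
  interpret rho: prob_space rho unfolding rho_def by (rule prob_space_distr) simp
  interpret P: pair_prob_space rho nu ..
  have eq: "rho \<Otimes>\<^sub>M nu = distr M (PiM {m} (\<lambda>_. borel) \<Otimes>\<^sub>M PiM A (\<lambda>_. borel)) (\<lambda>\<omega>. (W \<omega>, V \<omega>))"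
    using ind unfolding indep_var_distribution_eq nu_def rho_def by simp
  have Gm[measurable]: "(\<lambda>p. G (fst p m) (snd p)) \<in> borel_measurable (PiM {m} (\<lambda>_. borel) \<Otimes>\<^sub>M PiM A (\<lambda>_. borel))"
  proof -
    have "(\<lambda>p. (fst p m, snd p)) \<in> measurable (PiM {m} (\<lambda>_. borel) \<Otimes>\<^sub>M PiM A (\<lambda>_. borel)) (borel \<Otimes>\<^sub>M PiM A (\<lambda>_. borel))"
      by measurable
    from measurable_comp[OF this G] show ?thesis by (simp add: o_def)
  qed
  have int: "integrable (rho \<Otimes>\<^sub>M nu) (\<lambda>p. G (fst p m) (snd p))"
    by (rule P.integrable_const_bound[where B=B]) (auto simp: B nu_def rho_def)
  define f where "f x = (\<integral>v. G x v \<partial>nu)" for x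
  have f[measurable]: "f \<in> borel_measurable borel"
  proof -
    have "(\<lambda>(x, v). G x v) \<in> borel_measurable (borel \<Otimes>\<^sub>M nu)"
      using G by (simp add: nu_def case_prod_beta')
    then show ?thesis unfolding f_def by (rule nu.borel_measurable_lebesgue_integral)
  qed
  have "expectation (\<lambda>\<omega>. G (X m \<omega>) (V \<omega>)) = expectation (\<lambda>\<omega>. G (fst (W \<omega>, V \<omega>) m) (snd (W \<omega>, V \<omega>)))"
    by (simp add: W_def)
  also have "\<dots> = integral\<^sup>L (distr M (PiM {m} (\<lambda>_. borel) \<Otimes>\<^sub>M PiM A (\<lambda>_. borel)) (\<lambda>\<omega>. (W \<omega>, V \<omega>))) (\<lambda>p. G (fst p m) (snd p))"
    by (rule integral_distr[symmetric]) auto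
  also have "\<dots> = integral\<^sup>L (rho \<Otimes>\<^sub>M nu) (\<lambda>p. G (fst p m) (snd p))"
    by (simp add: eq)
  also have "\<dots> = (\<integral>w. f (w m) \<partial>rho)"
    using P.integral_fst'[OF int] by (simp add: f_def)
  also have "\<dots> = expectation (\<lambda>\<omega>. f (W \<omega> m))"
    unfolding rho_def by (rule integral_distr) auto
  also have "\<dots> = expectation (\<lambda>\<omega>. f (X m \<omega>))"
    by (simp add: W_def)
  also have "\<dots> = integral\<^sup>L mu f"
    by (rule EX) simp
  also have "\<dots> = (\<integral>x. expectation (\<lambda>\<omega>. G x (V \<omega>)) \<partial>mu)"
  proof (rule Bochner_Integration.integral_cong[OF refl])
    fix x
    have [measurable]: "G x \<in> borel_measurable (PiM A (\<lambda>_. borel))"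
      using measurable_Pair2[OF G, of x] by (simp add: space_pair_measure)
    show "f x = expectation (\<lambda>\<omega>. G x (V \<omega>))"
      unfolding nu_def f_def by (rule integral_distr) auto
  qed
  finally show ?thesis unfolding V_def .
qed

end

definition hk :: "real \<Rightarrow> real \<Rightarrow> real \<Rightarrow> real" where
  "hk x y z = (if 2 * min x y < z then 1 else 0)"
definition aa :: "real \<Rightarrow> real \<Rightarrow> real" where
  "aa l x = - 1/6 + 2/3 * ee (3 * l) x"
definition bb :: "real \<Rightarrow> real \<Rightarrow> real" where
  "bb l z = 1/2 - ee l z"
definition rr :: "real \<Rightarrow> real \<Rightarrow> real \<Rightarrow> real \<Rightarrow> real" where
  "rr l x y z = hk x y z - 1/2 - aa l x - aa l y - bb l z"
definition psi :: "real \<Rightarrow> real \<Rightarrow> real" where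
  "psi l s = 1/3 * ee l s - 1/18 - 4/9 * ee (3 * l) s"

lemma hk_meas[measurable (raw)]:
  assumes [measurable]: "f \<in> borel_measurable N" "g \<in> borel_measurable N" "h \<in> borel_measurable N"
  shows "(\<lambda>x. hk (f x) (g x) (h x)) \<in> borel_measurable N"
  unfolding hk_def by measurable
lemma ee_meas2[measurable (raw)]:
  assumes [measurable]: "f \<in> borel_measurable N" shows "(\<lambda>x. ee c (f x)) \<in> borel_measurable N"
  unfolding ee_def by measurable
lemma aa_meas[measurable]: "aa l \<in> borel_measurable borel"
  unfolding aa_def by measurable
lemma bb_meas[measurable]: "bb l \<in> borel_measurable borel"
  unfolding bb_def by measurable
lemma psi_meas[measurable]: "psi l \<in> borel_measurable borel"
  unfolding psi_def by measurable
lemma rr_meas[measurable (raw)]: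
  assumes [measurable]: "f \<in> borel_measurable N" "g \<in> borel_measurable N" "h \<in> borel_measurable N"
  shows "(\<lambda>x. rr l (f x) (g x) (h x)) \<in> borel_measurable N"
  unfolding rr_def by measurable

lemma rr_sym: "rr l x y z = rr l y x z"
  unfolding rr_def hk_def by (simp add: min.commute)

lemma rr_bound: assumes "0 \<le> l" shows "\<bar>rr l x y z\<bar> \<le> 3"
proof -
  have "0 < ee (3*l) x" "ee (3*l) x \<le> 1" "0 < ee (3*l) y" "ee (3*l) y \<le> 1" "0 < ee l z" "ee l z \<le> 1"
    using ee_bounds assms by auto
  then show ?thesis unfolding rr_def hk_def aa_def bb_def by auto
qed

lemma psi_bound: assumes "0 \<le> l" shows "\<bar>psi l x\<bar> \<le> 1"
proof -
  have "0 < ee (3*l) x" "ee (3*l) x \<le> 1" "0 < ee l x" "ee l x \<le> 1"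
    using ee_bounds assms by auto
  then show ?thesis unfolding psi_def by auto
qed

lemma ee_mult: "ee a y * ee b y = ee (a + b) y"
  unfolding ee_def by (simp add: exp_add[symmetric] algebra_simps)

lemma two_a_b: "2 * aa l x + bb l x = - 3 * psi l x"
  unfolding aa_def bb_def psi_def by simp

sublocale ES \<subseteq> MU: prob_space mu by (rule mu_prob)

lemma ee_abs: "0 \<le> c \<Longrightarrow> \<bar>ee c x\<bar> \<le> 1"
  using ee_bounds[of c x] by auto

context ES
begin

lemma mu_UNIV[simp]: "MU.prob UNIV = 1"
  using MU.prob_space by simp

lemma integrable_const_mu[simp]: "integrable mu (\<lambda>_. c::real)"
  by simp
lemma int_const_mu[simp]: "integral\<^sup>L mu (\<lambda>_. c::real) = c"
  by (simp add: MU.prob_space[simplified])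
lemma integrable_ee_mult[simp]: "0 \<le> c \<Longrightarrow> integrable mu (\<lambda>y. a * ee c y)"
  by (rule MU.integrable_const_bound[where B="\<bar>a\<bar>"]) (auto intro!: AE_I2 mult_left_le ee_abs simp: abs_mult)

lemma integrable_ee[simp]: "0 \<le> c \<Longrightarrow> integrable mu (ee c)"
  by (rule MU.integrable_const_bound[where B=1]) (auto intro!: AE_I2 ee_abs)

lemma integrable_bdd: "(f::real\<Rightarrow>real) \<in> borel_measurable borel \<Longrightarrow> (\<And>x. \<bar>f x\<bar> \<le> B) \<Longrightarrow> integrable mu f"
  by (rule MU.integrable_const_bound[where B=B]) auto

lemma int_aa: "integral\<^sup>L mu (aa l) = 0"
proof -
  have "integral\<^sup>L mu (aa l) = (\<integral>y. - 1/6 + 2/3 * ee (3 * l) y \<partial>mu)" unfolding aa_def ..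
  also have "\<dots> = - 1/6 + 2/3 * integral\<^sup>L mu (ee (3*l))"
    using l_pos by (simp add: integral_add)
  also have "\<dots> = 0" using l_pos by (simp add: mu_ee)
  finally show ?thesis .
qed

lemma int_bb: "integral\<^sup>L mu (bb l) = 0"
proof -
  have "integral\<^sup>L mu (bb l) = (\<integral>y. 1/2 - ee l y \<partial>mu)" unfolding bb_def ..
  also have "\<dots> = 1/2 - integral\<^sup>L mu (ee l)"
    using l_pos by (simp add: integral_diff)
  also have "\<dots> = 0" using l_pos by (simp add: mu_ee)
  finally show ?thesis .
qed

lemma int_psi: "integral\<^sup>L mu (psi l) = 0"
proof -
  have "integral\<^sup>L mu (psi l) = (\<integral>y. 1/3 * ee l y - 1/18 - 4/9 * ee (3 * l) y \<partial>mu)" unfolding psi_def ..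
  also have "\<dots> = 1/3 * integral\<^sup>L mu (ee l) - 1/18 - 4/9 * integral\<^sup>L mu (ee (3*l))"
    using l_pos by (simp add: integral_diff)
  also have "\<dots> = 0" using l_pos by (simp add: mu_ee)
  finally show ?thesis .
qed

lemma int_psi2: "(\<integral>y. (psi l y)^2 \<partial>mu) = 11/3780"
proof -
  have eq: "(psi l y)^2 = 1/9 * ee (2*l) y + 1/324 + 16/81 * ee (6*l) y - 1/27 * ee l y - 8/27 * ee (4*l) y + 4/81 * ee (3*l) y" for y
  proof -
    have "(psi l y)^2 = 1/9 * (ee l y * ee l y) + 1/324 + 16/81 * (ee (3*l) y * ee (3*l) y) - 1/27 * ee l y - 8/27 * (ee l y * ee (3*l) y) + 4/81 * ee (3*l) y"
      unfolding psi_def power2_eq_square by (simp add: algebra_simps)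
    then show ?thesis by (simp add: ee_mult)
  qed
  have "(\<integral>y. (psi l y)^2 \<partial>mu) = (\<integral>y. 1/9 * ee (2*l) y + 1/324 + 16/81 * ee (6*l) y - 1/27 * ee l y - 8/27 * ee (4*l) y + 4/81 * ee (3*l) y \<partial>mu)"
    by (simp only: eq)
  also have "\<dots> = 1/9 * integral\<^sup>L mu (ee (2*l)) + 1/324 + 16/81 * integral\<^sup>L mu (ee (6*l)) - 1/27 * integral\<^sup>L mu (ee l) - 8/27 * integral\<^sup>L mu (ee (4*l)) + 4/81 * integral\<^sup>L mu (ee (3*l))"
    using l_pos by (simp add: integral_diff integral_add)
  also have "\<dots> = 11/3780" using l_pos by (simp add: mu_ee field_simps)
  finally show ?thesis .
qed

end

context ES
begin

lemma int_hk_z: "(\<integral>z. hk x y z \<partial>mu) = ee (2*l) (min x y)"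
proof (cases "0 \<le> min x y")
  case True
  have "(\<integral>z. hk x y z \<partial>mu) = (\<integral>z. indicator {2 * min x y<..} z \<partial>mu)"
    by (rule Bochner_Integration.integral_cong) (auto simp: hk_def indicator_def)
  also have "\<dots> = exp (- (2 * min x y) * l)" using True by (intro mu_gt) simp
  also have "\<dots> = ee (2*l) (min x y)" using True by (simp add: ee_def max_def algebra_simps)
  finally show ?thesis .
next
  case False
  have ae: "AE z in mu. hk x y z = 1"
    using AE_mu_nonneg by eventually_elim (use False in \<open>auto simp: hk_def\<close>)
  have "(\<integral>z. hk x y z \<partial>mu) = (\<integral>z. 1 \<partial>mu)"
    by (rule integral_cong_AE) (use ae in auto)
  also have "\<dots> = ee (2*l) (min x y)"
  proof -
    have "max 0 (min x y) = 0" using False unfolding max_def by argo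
    then show ?thesis by (simp add: ee_def)
  qed
  finally show ?thesis .
qed

lemma prob_ge[simp]: "0 \<le> a \<Longrightarrow> MU.prob {a..} = exp (- a * l)"
  using mu_ge[of a] by simp

lemma hk_bound: "\<bar>hk x y z\<bar> \<le> 1"
  by (simp add: hk_def)

lemma integrable_hk_z[simp]: "integrable mu (\<lambda>z. hk x y z)"
  by (rule integrable_bdd[where B=1]) (auto simp: hk_bound)
lemma integrable_hk_y[simp]: "integrable mu (\<lambda>y. hk x y z)"
  by (rule integrable_bdd[where B=1]) (auto simp: hk_bound)
lemma integrable_aa[simp]: "integrable mu (aa l)"
  unfolding aa_def using l_pos by simp
lemma integrable_bb[simp]: "integrable mu (bb l)"
  unfolding bb_def using l_pos by simp

lemma int_rr_z: "(\<integral>z. rr l x y z \<partial>mu) = ee (2*l) (min x y) - 1/2 - aa l x - aa l y"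
proof -
  have "(\<integral>z. rr l x y z \<partial>mu) = (\<integral>z. hk x y z + (- 1/2 - aa l x - aa l y) - bb l z \<partial>mu)"
    unfolding rr_def by (simp add: algebra_simps)
  also have "\<dots> = (\<integral>z. hk x y z \<partial>mu) + (- 1/2 - aa l x - aa l y) - integral\<^sup>L mu (bb l)"
    by (simp add: integral_diff integral_add)
  also have "\<dots> = ee (2*l) (min x y) - 1/2 - aa l x - aa l y"
    by (simp add: int_hk_z int_bb)
  finally show ?thesis .
qed

lemma mu_tail_ee:
  assumes a: "0 \<le> a" and c: "0 \<le> c"
  shows "(\<integral>y. indicator {a..} y * ee c y \<partial>mu) = exp (- a * l) * exp (- c * a) * (l / (l + c))"
proof -
  have "(\<integral>y. indicator {a..} y * ee c y \<partial>mu) = exp (- a * l) * (\<integral>u. ee c (a + u) \<partial>mu)"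
    by (rule mu_tail[OF a]) simp
  also have "(\<integral>u. ee c (a + u) \<partial>mu) = (\<integral>u. exp (- c * a) * ee c u \<partial>mu)"
  proof (rule integral_cong_AE)
    show "AE u in mu. ee c (a + u) = exp (- c * a) * ee c u"
      using AE_mu_nonneg by eventually_elim (use a in \<open>auto simp: ee_def max_def exp_add[symmetric] algebra_simps\<close>)
  qed auto
  also have "\<dots> = exp (- c * a) * (l / (l + c))"
    using c by (simp add: mu_ee)
  finally show ?thesis by simp
qed

lemma int_ee_min:
  assumes x: "0 \<le> x"
  shows "(\<integral>y. ee (2*l) (min x y) \<partial>mu) = 1/3 + 2/3 * ee (3*l) x"
proof -
  have pw: "ee (2*l) (min x y) = ee (2*l) y + ee (2*l) x * indicator {x..} y - indicator {x..} y * ee (2*l) y" for y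
    by (auto simp: indicator_def min_def)
  have i1: "integrable mu (\<lambda>y. ee (2*l) x * indicator {x..} y :: real)"
    by (rule integrable_bdd[where B="\<bar>ee (2*l) x\<bar>"]) (auto simp: indicator_def)
  have i2: "integrable mu (\<lambda>y. indicator {x..} y * ee (2*l) y)"
    by (rule integrable_bdd[where B=1]) (use l_pos in \<open>auto simp: indicator_def intro: ee_abs\<close>)
  have "(\<integral>y. ee (2*l) (min x y) \<partial>mu) = (\<integral>y. ee (2*l) y + ee (2*l) x * indicator {x..} y - indicator {x..} y * ee (2*l) y \<partial>mu)"
    by (simp only: pw)
  also have "\<dots> = integral\<^sup>L mu (ee (2*l)) + ee (2*l) x * (\<integral>y. indicator {x..} y \<partial>mu) - (\<integral>y. indicator {x..} y * ee (2*l) y \<partial>mu)"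
    using l_pos i1 i2 by (simp add: integral_diff integral_add)
  also have "\<dots> = l / (l + 2*l) + ee (2*l) x * exp (- x * l) - exp (- x * l) * exp (- (2*l) * x) * (l / (l + 2*l))"
    using l_pos x by (simp add: mu_ee mu_ge mu_tail_ee)
  also have "\<dots> = 1/3 + 2/3 * ee (3*l) x"
  proof -
    have "ee (2*l) x * exp (- x * l) = ee (3*l) x" "exp (- x * l) * exp (- (2*l) * x) = ee (3*l) x"
      using x by (auto simp: ee_def max_def exp_add[symmetric] algebra_simps)
    then show ?thesis using l_pos by (simp add: field_simps)
  qed
  finally show ?thesis .
qed

lemma DG1:
  assumes x: "0 \<le> x"
  shows "(\<integral>y. (\<integral>z. rr l x y z \<partial>mu) \<partial>mu) = 0"
proof -
  have "(\<integral>y. (\<integral>z. rr l x y z \<partial>mu) \<partial>mu) = (\<integral>y. ee (2*l) (min x y) + (- 1/2 - aa l x) - aa l y \<partial>mu)"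
    by (simp add: int_rr_z algebra_simps)
  also have "\<dots> = (\<integral>y. ee (2*l) (min x y) \<partial>mu) + (- 1/2 - aa l x) - integral\<^sup>L mu (aa l)"
  proof -
    have "integrable mu (\<lambda>y. ee (2*l) (min x y))"
      by (rule integrable_bdd[where B=1]) (use l_pos in \<open>auto intro: ee_abs\<close>)
    then show ?thesis by (simp add: integral_diff integral_add)
  qed
  also have "\<dots> = 0"
    using x by (simp add: int_ee_min int_aa aa_def)
  finally show ?thesis .
qed

lemma DG3:
  assumes x: "0 \<le> x"
  shows "(\<integral>y. (\<integral>z. rr l y z x \<partial>mu) \<partial>mu) = 0"
proof -
  have hk_eq: "hk y z x = 1 - indicator {x/2..} y * indicator {x/2..} z" for y z
    by (auto simp: hk_def indicator_def min_def)
  have e: "exp (- (x/2) * l) * exp (- (x/2) * l) = exp (- x * l)"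
    by (simp add: exp_add[symmetric] algebra_simps)
  have iz: "(\<integral>z. hk y z x \<partial>mu) = 1 - indicator {x/2..} y * exp (- (x/2) * l)" for y
  proof -
    have ii: "integrable mu (\<lambda>z. indicator {x/2..} y * indicator {x/2..} z :: real)"
      by (rule integrable_bdd[where B=1]) (auto simp: indicator_def)
    have "(\<integral>z. hk y z x \<partial>mu) = (\<integral>z. 1 - indicator {x/2..} y * indicator {x/2..} z \<partial>mu)"
      by (simp only: hk_eq)
    also have "\<dots> = 1 - indicator {x/2..} y * (\<integral>z. indicator {x/2..} z \<partial>mu)"
      using ii by (simp add: integral_diff)
    also have "\<dots> = 1 - indicator {x/2..} y * exp (- (x/2) * l)"
      using x by (simp add: mu_ge)
    finally show ?thesis .
  qed
  have irz: "(\<integral>z. rr l y z x \<partial>mu) = (1 - 1/2 - bb l x) - indicator {x/2..} y * exp (- (x/2) * l) - aa l y" for y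
  proof -
    have "(\<integral>z. rr l y z x \<partial>mu) = (\<integral>z. hk y z x + (- 1/2 - aa l y - bb l x) - aa l z \<partial>mu)"
      unfolding rr_def by (simp add: algebra_simps)
    also have "\<dots> = (\<integral>z. hk y z x \<partial>mu) + (- 1/2 - aa l y - bb l x) - integral\<^sup>L mu (aa l)"
      by (simp add: integral_diff integral_add)
    also have "\<dots> = (1 - 1/2 - bb l x) - indicator {x/2..} y * exp (- (x/2) * l) - aa l y"
      by (simp add: iz int_aa)
    finally show ?thesis .
  qed
  have ii: "integrable mu (\<lambda>y. indicator {x/2..} y * exp (- (x/2) * l) :: real)"
    by (rule integrable_bdd[where B="exp (- (x/2) * l)"]) (auto simp: indicator_def)
  have "(\<integral>y. (\<integral>z. rr l y z x \<partial>mu) \<partial>mu) = (\<integral>y. (1 - 1/2 - bb l x) - indicator {x/2..} y * exp (- (x/2) * l) - aa l y \<partial>mu)"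
    by (simp only: irz)
  also have "\<dots> = (1 - 1/2 - bb l x) - (\<integral>y. indicator {x/2..} y \<partial>mu) * exp (- (x/2) * l) - integral\<^sup>L mu (aa l)"
    using ii by (simp add: integral_diff)
  also have "\<dots> = 0"
    using x e by (simp add: mu_ge int_aa bb_def ee_def)
  finally show ?thesis .
qed

end

context ES
begin

lemma Z2:
  fixes \<phi> :: "real \<Rightarrow> real \<Rightarrow> real" and \<Gamma> :: "(nat \<Rightarrow> real) \<Rightarrow> real"
  assumes A: "finite A" "b \<noteq> c" "b \<notin> A" "c \<notin> A"
    and \<phi>m[measurable]: "(\<lambda>p. \<phi> (fst p) (snd p)) \<in> borel_measurable (borel \<Otimes>\<^sub>M borel)"
    and \<Gamma>m[measurable]: "\<Gamma> \<in> borel_measurable (PiM A (\<lambda>_. borel))"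
    and \<phi>b: "\<And>y z. \<bar>\<phi> y z\<bar> \<le> B1" and \<Gamma>b: "\<And>v. \<bar>\<Gamma> v\<bar> \<le> B2"
    and zero: "(\<integral>y. (\<integral>z. \<phi> y z \<partial>mu) \<partial>mu) = 0"
  shows "expectation (\<lambda>\<omega>. \<phi> (X b \<omega>) (X c \<omega>) * \<Gamma> (restrict (\<lambda>i. X i \<omega>) A)) = 0"
proof -
  define A1 where "A1 = insert c A"
  have A1: "finite A1" "b \<notin> A1" "A \<subseteq> A1" "c \<in> A1" using A by (auto simp: A1_def)
  define G1 where "G1 y v = \<phi> y (v c) * \<Gamma> (restrict v A)" for y and v :: "nat \<Rightarrow> real"
  define G2 where "G2 y z v = \<phi> y z * \<Gamma> v" for y z and v :: "nat \<Rightarrow> real"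
  have bnd: "\<bar>\<phi> y z * \<Gamma> v\<bar> \<le> B1 * B2" for y z v
    unfolding abs_mult by (rule mult_mono) (auto intro: \<phi>b \<Gamma>b order.trans[OF abs_ge_zero \<phi>b])
  have m1: "(\<lambda>p. G1 (fst p) (snd p)) \<in> borel_measurable (borel \<Otimes>\<^sub>M PiM A1 (\<lambda>_. borel))"
  proof -
    have r: "(\<lambda>p. restrict (snd p) A) \<in> measurable (borel \<Otimes>\<^sub>M PiM A1 (\<lambda>_. borel)) (PiM A (\<lambda>_. borel))"
      using measurable_restrict_subset[OF A1(3), of "\<lambda>_. borel"] by measurable
    have c: "(\<lambda>p. snd p c) \<in> borel_measurable (borel \<Otimes>\<^sub>M PiM A1 (\<lambda>_. borel))"
      using A1(4) by measurable
    have "(\<lambda>p. (fst p, snd p c)) \<in> measurable (borel \<Otimes>\<^sub>M PiM A1 (\<lambda>_. borel)) (borel \<Otimes>\<^sub>M borel)"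
      using c by measurable
    from measurable_comp[OF this \<phi>m] have "(\<lambda>p. \<phi> (fst p) (snd p c)) \<in> borel_measurable (borel \<Otimes>\<^sub>M PiM A1 (\<lambda>_. borel))"
      by (simp add: o_def)
    moreover from measurable_comp[OF r \<Gamma>m] have "(\<lambda>p. \<Gamma> (restrict (snd p) A)) \<in> borel_measurable (borel \<Otimes>\<^sub>M PiM A1 (\<lambda>_. borel))"
      by (simp add: o_def)
    ultimately show ?thesis unfolding G1_def by measurable
  qed
  have m2: "(\<lambda>p. G2 y (fst p) (snd p)) \<in> borel_measurable (borel \<Otimes>\<^sub>M PiM A (\<lambda>_. borel))" for y
  proof -
    have "(\<lambda>p. (y, fst p)) \<in> measurable (borel \<Otimes>\<^sub>M PiM A (\<lambda>_. borel)) (borel \<Otimes>\<^sub>M borel)"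
      by measurable
    from measurable_comp[OF this \<phi>m] have "(\<lambda>p. \<phi> y (fst p)) \<in> borel_measurable (borel \<Otimes>\<^sub>M PiM A (\<lambda>_. borel))"
      by (simp add: o_def)
    then show ?thesis unfolding G2_def by measurable
  qed
  have "expectation (\<lambda>\<omega>. \<phi> (X b \<omega>) (X c \<omega>) * \<Gamma> (restrict (\<lambda>i. X i \<omega>) A))
      = expectation (\<lambda>\<omega>. G1 (X b \<omega>) (restrict (\<lambda>i. X i \<omega>) A1))"
    using A1 by (simp add: G1_def restrict_restrict Int_absorb1)
  also have "\<dots> = (\<integral>y. expectation (\<lambda>\<omega>. G1 y (restrict (\<lambda>i. X i \<omega>) A1)) \<partial>mu)"
    by (rule FE[OF A1(1,2) m1, where B="B1 * B2"]) (simp add: G1_def bnd)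
  also have "\<dots> = (\<integral>y. (\<integral>z. \<phi> y z \<partial>mu) * expectation (\<lambda>\<omega>. \<Gamma> (restrict (\<lambda>i. X i \<omega>) A)) \<partial>mu)"
  proof (rule Bochner_Integration.integral_cong[OF refl])
    fix y
    have "expectation (\<lambda>\<omega>. G1 y (restrict (\<lambda>i. X i \<omega>) A1)) = expectation (\<lambda>\<omega>. G2 y (X c \<omega>) (restrict (\<lambda>i. X i \<omega>) A))"
      using A1 by (simp add: G1_def G2_def restrict_restrict Int_absorb1)
    also have "\<dots> = (\<integral>z. expectation (\<lambda>\<omega>. G2 y z (restrict (\<lambda>i. X i \<omega>) A)) \<partial>mu)"
      by (rule FE[OF A(1,4) m2, where B="B1 * B2"]) (simp add: G2_def bnd)
    also have "\<dots> = (\<integral>z. \<phi> y z * expectation (\<lambda>\<omega>. \<Gamma> (restrict (\<lambda>i. X i \<omega>) A)) \<partial>mu)"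
      unfolding G2_def by simp
    also have "\<dots> = (\<integral>z. \<phi> y z \<partial>mu) * expectation (\<lambda>\<omega>. \<Gamma> (restrict (\<lambda>i. X i \<omega>) A))"
      by simp
    finally show "expectation (\<lambda>\<omega>. G1 y (restrict (\<lambda>i. X i \<omega>) A1)) = (\<integral>z. \<phi> y z \<partial>mu) * expectation (\<lambda>\<omega>. \<Gamma> (restrict (\<lambda>i. X i \<omega>) A))" .
  qed
  also have "\<dots> = (\<integral>y. (\<integral>z. \<phi> y z \<partial>mu) \<partial>mu) * expectation (\<lambda>\<omega>. \<Gamma> (restrict (\<lambda>i. X i \<omega>) A))"
    by simp
  also have "\<dots> = 0" by (simp add: zero)
  finally show ?thesis .
qed

end

definition Sset :: "nat \<times> nat \<times> nat \<Rightarrow> nat set" where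
  "Sset t = (case t of (i, j, k) \<Rightarrow> {i, j, k})"
definition nondiag :: "nat \<times> nat \<times> nat \<Rightarrow> bool" where
  "nondiag t = (case t of (i, j, k) \<Rightarrow> i \<noteq> j \<and> k \<noteq> i \<and> k \<noteq> j)"
definition ov :: "nat \<times> nat \<times> nat \<Rightarrow> nat \<times> nat \<times> nat \<Rightarrow> bool" where
  "ov t t' = (\<exists>u v. u \<noteq> v \<and> u \<in> Sset t \<and> v \<in> Sset t \<and> u \<in> Sset t' \<and> v \<in> Sset t')"
definition Rv :: "real \<Rightarrow> nat \<times> nat \<times> nat \<Rightarrow> (nat \<Rightarrow> real) \<Rightarrow> real" where
  "Rv l t v = (case t of (i, j, k) \<Rightarrow> rr l (v i) (v j) (v k))"

lemma Rv_cong: "(\<And>a. a \<in> Sset t \<Longrightarrow> v a = w a) \<Longrightarrow> Rv l t v = Rv l t w"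
  by (cases t) (auto simp: Rv_def Sset_def)

lemma Rv_bound: "0 \<le> l \<Longrightarrow> \<bar>Rv l t v\<bar> \<le> 3"
  by (cases t) (auto simp: Rv_def intro: rr_bound)

lemma Rv_meas:
  assumes "\<And>a. a \<in> Sset t \<Longrightarrow> (\<lambda>p. F p a) \<in> borel_measurable N"
  shows "(\<lambda>p. Rv l t (F p)) \<in> borel_measurable N"
proof (cases t)
  case (fields i j k)
  have [measurable]: "(\<lambda>p. F p i) \<in> borel_measurable N" "(\<lambda>p. F p j) \<in> borel_measurable N" "(\<lambda>p. F p k) \<in> borel_measurable N"
    using assms by (auto simp: fields Sset_def)
  show ?thesis unfolding fields Rv_def by simp measurable
qed

lemma ov_sym: "ov t t' = ov t' t"
  unfolding ov_def by blast

lemma upd_comp_meas: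
  assumes "a \<in> insert m A"
  shows "(\<lambda>p. ((snd p)(m := fst p)) a) \<in> borel_measurable (borel \<Otimes>\<^sub>M PiM A (\<lambda>_. borel))"
proof (cases "a = m")
  case True then show ?thesis by simp
next
  case False then have "a \<in> A" using assms by auto
  with False show ?thesis by simp measurable
qed

lemma upd_comp_meas1:
  assumes "a \<in> insert m A"
  shows "(\<lambda>w. (w(m := x)) a) \<in> borel_measurable (PiM A (\<lambda>_. borel))"
proof (cases "a = m")
  case True then show ?thesis by simp
next
  case False then have "a \<in> A" using assms by auto
  with False show ?thesis by simp
qed

context ES
begin

lemma ZL:
  assumes nd: "nondiag t" and nov: "\<not> ov t t'"
  shows "expectation (\<lambda>\<omega>. Rv l t (\<lambda>i. X i \<omega>) * Rv l t' (\<lambda>i. X i \<omega>)) = 0"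
proof -
  obtain i j k where t: "t = (i, j, k)" by (cases t)
  have dist: "i \<noteq> j" "k \<noteq> i" "k \<noteq> j" using nd by (auto simp: t nondiag_def)
  obtain m where m: "m \<in> Sset t" "Sset t \<inter> Sset t' \<subseteq> {m}"
  proof (cases "Sset t \<inter> Sset t' = {}")
    case True then show ?thesis by (intro that[of i]) (auto simp: t Sset_def)
  next
    case False
    then obtain u where u: "u \<in> Sset t \<inter> Sset t'" by blast
    have "Sset t \<inter> Sset t' \<subseteq> {u}" using u nov unfolding ov_def by blast
    with u show ?thesis by (intro that[of u]) auto
  qed
  define A where "A = (Sset t \<union> Sset t') - {m}"
  define A' where "A' = Sset t' - {m}"
  have finS: "finite (Sset s)" for s by (cases s) (auto simp: Sset_def)
  have finA: "finite A" "m \<notin> A" "finite A'" using finS by (auto simp: A_def A'_def)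
  define G where "G x v = Rv l t (v(m := x)) * Rv l t' (v(m := x))" for x and v :: "nat \<Rightarrow> real"
  have Gm: "(\<lambda>p. G (fst p) (snd p)) \<in> borel_measurable (borel \<Otimes>\<^sub>M PiM A (\<lambda>_. borel))"
  proof -
    have "(\<lambda>p. Rv l s ((snd p)(m := fst p))) \<in> borel_measurable (borel \<Otimes>\<^sub>M PiM A (\<lambda>_. borel))"
      if "s = t \<or> s = t'" for s
      by (rule Rv_meas, rule upd_comp_meas) (use that in \<open>auto simp: A_def\<close>)
    then show ?thesis unfolding G_def by (simp add: borel_measurable_times)
  qed
  have Gb: "\<bar>G x v\<bar> \<le> 3 * 3" for x v
    unfolding G_def abs_mult using l_pos by (intro mult_mono Rv_bound) auto
  have "expectation (\<lambda>\<omega>. Rv l t (\<lambda>i. X i \<omega>) * Rv l t' (\<lambda>i. X i \<omega>))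
      = expectation (\<lambda>\<omega>. G (X m \<omega>) (restrict (\<lambda>i. X i \<omega>) A))"
  proof (rule arg_cong[where f=expectation], rule ext)
    fix \<omega>
    have "Rv l s (\<lambda>i. X i \<omega>) = Rv l s ((restrict (\<lambda>i. X i \<omega>) A)(m := X m \<omega>))" if "s = t \<or> s = t'" for s
      by (rule Rv_cong) (use that in \<open>auto simp: A_def\<close>)
    then show "Rv l t (\<lambda>i. X i \<omega>) * Rv l t' (\<lambda>i. X i \<omega>) = G (X m \<omega>) (restrict (\<lambda>i. X i \<omega>) A)"
      unfolding G_def by simp
  qed
  also have "\<dots> = (\<integral>x. expectation (\<lambda>\<omega>. G x (restrict (\<lambda>i. X i \<omega>) A)) \<partial>mu)"
    by (rule FE[OF finA(1,2) Gm Gb])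
  also have "\<dots> = 0"
  proof (rule integral_eq_zero_AE)
    show "AE x in mu. expectation (\<lambda>\<omega>. G x (restrict (\<lambda>i. X i \<omega>) A)) = 0"
      using AE_mu_nonneg
    proof eventually_elim
      fix x :: real assume x: "0 \<le> x"
      define \<Gamma> where "\<Gamma> w = Rv l t' (w(m := x))" for w :: "nat \<Rightarrow> real"
      have \<Gamma>m: "\<Gamma> \<in> borel_measurable (PiM A' (\<lambda>_. borel))"
        unfolding \<Gamma>_def by (rule Rv_meas, rule upd_comp_meas1) (auto simp: A'_def)
      have \<Gamma>b: "\<bar>\<Gamma> w\<bar> \<le> 3" for w unfolding \<Gamma>_def using l_pos by (intro Rv_bound) auto
      have \<Gamma>eq: "Rv l t' ((restrict (\<lambda>i. X i \<omega>) A)(m := x)) = \<Gamma> (restrict (\<lambda>i. X i \<omega>) A')" for \<omega>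
        unfolding \<Gamma>_def by (rule Rv_cong) (auto simp: A_def A'_def)
      have core: "expectation (\<lambda>\<omega>. G x (restrict (\<lambda>i. X i \<omega>) A)) = 0"
        if bc: "b \<noteq> c" "b \<in> Sset t" "c \<in> Sset t" "b \<noteq> m" "c \<noteq> m"
          and \<phi>m: "(\<lambda>p. \<phi> (fst p) (snd p)) \<in> borel_measurable (borel \<Otimes>\<^sub>M borel)"
          and \<phi>b: "\<And>y z. \<bar>\<phi> y z\<bar> \<le> 3"
          and zero: "(\<integral>y. (\<integral>z. \<phi> y z \<partial>mu) \<partial>mu) = 0"
          and eq: "\<And>\<omega>. Rv l t ((restrict (\<lambda>i. X i \<omega>) A)(m := x)) = \<phi> (X b \<omega>) (X c \<omega>)"
        for b c \<phi>
      proof -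
        have "b \<notin> A'" "c \<notin> A'" using bc m by (auto simp: A'_def)
        have "expectation (\<lambda>\<omega>. G x (restrict (\<lambda>i. X i \<omega>) A)) = expectation (\<lambda>\<omega>. \<phi> (X b \<omega>) (X c \<omega>) * \<Gamma> (restrict (\<lambda>i. X i \<omega>) A'))"
          unfolding G_def by (simp only: eq \<Gamma>eq)
        also have "\<dots> = 0"
          by (rule Z2[OF finA(3) bc(1) \<open>b \<notin> A'\<close> \<open>c \<notin> A'\<close> \<phi>m \<Gamma>m \<phi>b \<Gamma>b zero])
        finally show ?thesis .
      qed
      have mi: "m = i \<or> m = j \<or> m = k" using m by (auto simp: t Sset_def)
      have rm: "(\<lambda>p. rr l (f1 p) (f2 p) (f3 p)) \<in> borel_measurable (borel \<Otimes>\<^sub>M borel)"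
        if [measurable]: "f1 \<in> borel_measurable (borel \<Otimes>\<^sub>M borel)" "f2 \<in> borel_measurable (borel \<Otimes>\<^sub>M borel)" "f3 \<in> borel_measurable (borel \<Otimes>\<^sub>M borel)"
        for f1 f2 f3 :: "real \<times> real \<Rightarrow> real" by measurable
      show "expectation (\<lambda>\<omega>. G x (restrict (\<lambda>i. X i \<omega>) A)) = 0"
      proof -
        { assume mi': "m = i"
          have ?thesis
          proof (rule core[of j k "\<lambda>y z. rr l x y z"])
            show "(\<lambda>p. rr l x (fst p) (snd p)) \<in> borel_measurable (borel \<Otimes>\<^sub>M borel)" by (rule rm) auto
            show "(\<integral>y. (\<integral>z. rr l x y z \<partial>mu) \<partial>mu) = 0" by (rule DG1[OF x])
            show "Rv l t ((restrict (\<lambda>i. X i \<omega>) A)(m := x)) = rr l x (X j \<omega>) (X k \<omega>)" for \<omega>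
              using mi' dist by (simp add: t Rv_def A_def Sset_def)
          qed (use mi' dist l_pos in \<open>auto simp: t Sset_def intro: rr_bound\<close>) }
        moreover
        { assume mj: "m = j"
          have ?thesis
          proof (rule core[of i k "\<lambda>y z. rr l y x z"])
            show "(\<lambda>p. rr l (fst p) x (snd p)) \<in> borel_measurable (borel \<Otimes>\<^sub>M borel)" by (rule rm) auto
            show "(\<integral>y. (\<integral>z. rr l y x z \<partial>mu) \<partial>mu) = 0" using DG1[OF x] by (simp add: rr_sym[of l _ x])
            show "Rv l t ((restrict (\<lambda>i. X i \<omega>) A)(m := x)) = rr l (X i \<omega>) x (X k \<omega>)" for \<omega>
              using mj dist by (simp add: t Rv_def A_def Sset_def)
          qed (use mj dist l_pos in \<open>auto simp: t Sset_def intro: rr_bound\<close>) }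
        moreover
        { assume mk: "m = k"
          have ?thesis
          proof (rule core[of i j "\<lambda>y z. rr l y z x"])
            show "(\<lambda>p. rr l (fst p) (snd p) x) \<in> borel_measurable (borel \<Otimes>\<^sub>M borel)" by (rule rm) auto
            show "(\<integral>y. (\<integral>z. rr l y z x \<partial>mu) \<partial>mu) = 0" by (rule DG3[OF x])
            show "Rv l t ((restrict (\<lambda>i. X i \<omega>) A)(m := x)) = rr l (X i \<omega>) (X j \<omega>) x" for \<omega>
              using mk dist by (simp add: t Rv_def A_def Sset_def)
          qed (use mk dist l_pos in \<open>auto simp: t Sset_def intro: rr_bound\<close>) }
        ultimately show ?thesis using mi by blast
      qed
    qed
  qed
  finally show ?thesis .
qed

end

definition bad :: "nat \<times> nat \<times> nat \<Rightarrow> nat \<times> nat \<times> nat \<Rightarrow> bool" where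
  "bad t t' = (ov t t' \<or> (\<not> nondiag t \<and> \<not> nondiag t'))"

context ES
begin

lemma R_meas[measurable]: "(\<lambda>\<omega>. Rv l t (\<lambda>i. X i \<omega>)) \<in> borel_measurable M"
  by (rule Rv_meas) simp

lemma ER_zero: "\<not> bad t t' \<Longrightarrow> expectation (\<lambda>\<omega>. Rv l t (\<lambda>i. X i \<omega>) * Rv l t' (\<lambda>i. X i \<omega>)) = 0"
proof -
  assume nb: "\<not> bad t t'"
  show ?thesis
  proof (cases "nondiag t")
    case True then show ?thesis using nb by (intro ZL) (auto simp: bad_def)
  next
    case False
    then have "nondiag t'" "\<not> ov t' t" using nb by (auto simp: bad_def ov_sym)
    from ZL[OF this] show ?thesis by (simp add: mult.commute)
  qed
qed

lemma ER_bound: "\<bar>expectation (\<lambda>\<omega>. Rv l t (\<lambda>i. X i \<omega>) * Rv l t' (\<lambda>i. X i \<omega>))\<bar> \<le> 9"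
proof -
  have b: "\<bar>Rv l t (\<lambda>i. X i \<omega>) * Rv l t' (\<lambda>i. X i \<omega>)\<bar> \<le> 9" for \<omega>
  proof -
    have "\<bar>Rv l t (\<lambda>i. X i \<omega>) * Rv l t' (\<lambda>i. X i \<omega>)\<bar> \<le> 3 * 3"
      unfolding abs_mult using l_pos by (intro mult_mono Rv_bound) auto
    then show ?thesis by simp
  qed
  have "\<bar>expectation (\<lambda>\<omega>. Rv l t (\<lambda>i. X i \<omega>) * Rv l t' (\<lambda>i. X i \<omega>))\<bar> \<le> expectation (\<lambda>\<omega>. \<bar>Rv l t (\<lambda>i. X i \<omega>) * Rv l t' (\<lambda>i. X i \<omega>)\<bar>)"
    using integral_norm_bound[of M "\<lambda>\<omega>. Rv l t (\<lambda>i. X i \<omega>) * Rv l t' (\<lambda>i. X i \<omega>)"] by simp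
  also have "\<dots> \<le> expectation (\<lambda>\<omega>. 9)"
    by (rule integral_mono) (auto intro!: integrable_const_bound[where B=9] b)
  also have "\<dots> = 9" using prob_space by simp
  finally show ?thesis .
qed

lemma ESQ:
  assumes T: "finite T"
  shows "expectation (\<lambda>\<omega>. (\<Sum>t\<in>T. Rv l t (\<lambda>i. X i \<omega>))^2) \<le> 9 * card {p \<in> T \<times> T. bad (fst p) (snd p)}"
proof -
  have int: "integrable M (\<lambda>\<omega>. Rv l t (\<lambda>i. X i \<omega>) * Rv l t' (\<lambda>i. X i \<omega>))" for t t'
  proof (rule integrable_const_bound[where B=9])
    show "AE x in M. norm (Rv l t (\<lambda>i. X i x) * Rv l t' (\<lambda>i. X i x)) \<le> 9"
    proof (rule AE_I2)
      fix x
      have "\<bar>Rv l t (\<lambda>i. X i x) * Rv l t' (\<lambda>i. X i x)\<bar> \<le> 3 * 3"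
        unfolding abs_mult using l_pos by (intro mult_mono Rv_bound) auto
      then show "norm (Rv l t (\<lambda>i. X i x) * Rv l t' (\<lambda>i. X i x)) \<le> 9" by simp
    qed
  qed simp
  have "expectation (\<lambda>\<omega>. (\<Sum>t\<in>T. Rv l t (\<lambda>i. X i \<omega>))^2)
      = expectation (\<lambda>\<omega>. \<Sum>t\<in>T. \<Sum>t'\<in>T. Rv l t (\<lambda>i. X i \<omega>) * Rv l t' (\<lambda>i. X i \<omega>))"
    by (simp add: power2_eq_square sum_product)
  also have "\<dots> = (\<Sum>t\<in>T. \<Sum>t'\<in>T. expectation (\<lambda>\<omega>. Rv l t (\<lambda>i. X i \<omega>) * Rv l t' (\<lambda>i. X i \<omega>)))"
    using int by (simp add: integrable_sum)
  also have "\<dots> \<le> (\<Sum>t\<in>T. \<Sum>t'\<in>T. if bad t t' then 9 else 0)"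
  proof (intro sum_mono)
    fix t t'
    show "expectation (\<lambda>\<omega>. Rv l t (\<lambda>i. X i \<omega>) * Rv l t' (\<lambda>i. X i \<omega>)) \<le> (if bad t t' then 9 else 0)"
      using ER_zero[of t t'] ER_bound[of t t'] by auto
  qed
  also have "\<dots> = (\<Sum>p\<in>T \<times> T. if bad (fst p) (snd p) then 9 else 0)"
    by (simp add: sum.cartesian_product case_prod_beta)
  also have "\<dots> = (\<Sum>p\<in>{p \<in> T \<times> T. bad (fst p) (snd p)}. 9)"
    using T by (subst sum.inter_filter) auto
  also have "\<dots> = 9 * card {p \<in> T \<times> T. bad (fst p) (snd p)}"
    by simp
  finally show ?thesis .
qed

end

definition Trip :: "nat \<Rightarrow> (nat \<times> nat \<times> nat) set" where
  "Trip n = {(i, j, k). i < j \<and> j < n \<and> k < n}"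

lemma Trip_sub: "Trip n \<subseteq> {..<n} \<times> {..<n} \<times> {..<n}"
  by (auto simp: Trip_def)

lemma finite_Trip[simp]: "finite (Trip n)"
  by (rule finite_subset[OF Trip_sub]) auto

lemma card_Trip: "card (Trip n) \<le> n^3"
proof -
  have "card (Trip n) \<le> card ({..<n} \<times> {..<n} \<times> {..<n})"
    by (rule card_mono[OF _ Trip_sub]) auto
  then show ?thesis by (simp add: card_cartesian_product power3_eq_cube)
qed

lemma card_Sset: "card (Sset t) \<le> 3"
  by (cases t) (auto simp: Sset_def card_insert_if)

lemma ov_sub:
  "{t' \<in> Trip n. ov t t'} \<subseteq> (Sset t \<times> Sset t \<times> {..<n}) \<union> (Sset t \<times> {..<n} \<times> Sset t) \<union> ({..<n} \<times> Sset t \<times> Sset t)"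
proof
  fix t' assume "t' \<in> {t' \<in> Trip n. ov t t'}"
  then obtain a b c where t': "t' = (a, b, c)" "a < n" "b < n" "c < n" and o: "ov t (a, b, c)"
    by (cases t') (auto simp: Trip_def)
  from o obtain u v where uv: "u \<noteq> v" "u \<in> Sset t" "v \<in> Sset t" "u \<in> {a, b, c}" "v \<in> {a, b, c}"
    by (auto simp: ov_def Sset_def)
  then show "t' \<in> (Sset t \<times> Sset t \<times> {..<n}) \<union> (Sset t \<times> {..<n} \<times> Sset t) \<union> ({..<n} \<times> Sset t \<times> Sset t)"
    using t' by auto
qed

lemma card_ov: "card {t' \<in> Trip n. ov t t'} \<le> 27 * n"
proof -
  let ?S = "Sset t"
  have fS: "finite ?S" by (cases t) (auto simp: Sset_def)
  have c1: "card (?S \<times> ?S \<times> {..<n}) \<le> 9 * n"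
  proof -
    have "card (?S \<times> ?S \<times> {..<n}) = card ?S * card ?S * n" by (simp add: card_cartesian_product)
    also have "\<dots> \<le> 3 * 3 * n" using card_Sset[of t] by (intro mult_le_mono) auto
    finally show ?thesis by simp
  qed
  have c2: "card (?S \<times> {..<n} \<times> ?S) \<le> 9 * n"
  proof -
    have "card (?S \<times> {..<n} \<times> ?S) = card ?S * card ?S * n" by (simp add: card_cartesian_product)
    also have "\<dots> \<le> 3 * 3 * n" using card_Sset[of t] by (intro mult_le_mono) auto
    finally show ?thesis by simp
  qed
  have c3: "card ({..<n} \<times> ?S \<times> ?S) \<le> 9 * n"
  proof -
    have "card ({..<n} \<times> ?S \<times> ?S) = card ?S * card ?S * n" by (simp add: card_cartesian_product)
    also have "\<dots> \<le> 3 * 3 * n" using card_Sset[of t] by (intro mult_le_mono) auto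
    finally show ?thesis by simp
  qed
  have "card {t' \<in> Trip n. ov t t'} \<le> card ((?S \<times> ?S \<times> {..<n}) \<union> (?S \<times> {..<n} \<times> ?S) \<union> ({..<n} \<times> ?S \<times> ?S))"
    by (rule card_mono[OF _ ov_sub]) (use fS in auto)
  also have "\<dots> \<le> card (?S \<times> ?S \<times> {..<n}) + card (?S \<times> {..<n} \<times> ?S) + card ({..<n} \<times> ?S \<times> ?S)"
    by (rule order.trans[OF card_Un_le]) (simp add: card_Un_le)
  also have "\<dots> \<le> 27 * n" using c1 c2 c3 by simp
  finally show ?thesis .
qed

lemma card_diag: "card {t \<in> Trip n. \<not> nondiag t} \<le> 2 * n^2"
proof -
  have sub: "{t \<in> Trip n. \<not> nondiag t} \<subseteq> (\<lambda>(i, j). (i, j, i)) ` ({..<n} \<times> {..<n}) \<union> (\<lambda>(i, j). (i, j, j)) ` ({..<n} \<times> {..<n})"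
  proof
    fix t assume "t \<in> {t \<in> Trip n. \<not> nondiag t}"
    then obtain i j k where t: "t = (i, j, k)" "i < j" "j < n" "k < n" "k = i \<or> k = j"
      by (cases t) (auto simp: Trip_def nondiag_def)
    then show "t \<in> (\<lambda>(i, j). (i, j, i)) ` ({..<n} \<times> {..<n}) \<union> (\<lambda>(i, j). (i, j, j)) ` ({..<n} \<times> {..<n})"
      by (auto intro!: image_eqI[where x="(i, j)"])
  qed
  have "card {t \<in> Trip n. \<not> nondiag t} \<le> card ((\<lambda>(i, j). (i, j, i)) ` ({..<n} \<times> {..<n}) \<union> (\<lambda>(i, j). (i, j, j)) ` ({..<n} \<times> {..<n}))"
    by (rule card_mono[OF _ sub]) auto
  also have "\<dots> \<le> card ((\<lambda>(i, j). (i, j, i)) ` ({..<n} \<times> {..<n})) + card ((\<lambda>(i, j). (i, j, j)) ` ({..<n} \<times> {..<n}))"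
    by (rule card_Un_le)
  also have "\<dots> \<le> card ({..<n} \<times> {..<n}) + card ({..<n} \<times> {..<n})"
    by (intro add_mono card_image_le) auto
  also have "\<dots> = 2 * n^2" by (simp add: card_cartesian_product power2_eq_square)
  finally show ?thesis .
qed

lemma card_bad: "card {p \<in> Trip n \<times> Trip n. bad (fst p) (snd p)} \<le> 31 * n^4"
proof -
  let ?T = "Trip n"
  let ?D = "{t \<in> Trip n. \<not> nondiag t}"
  have sub: "{p \<in> ?T \<times> ?T. bad (fst p) (snd p)} \<subseteq> Sigma ?T (\<lambda>t. {t' \<in> ?T. ov t t'}) \<union> ?D \<times> ?D"
    by (auto simp: bad_def)
  have "card {p \<in> ?T \<times> ?T. bad (fst p) (snd p)} \<le> card (Sigma ?T (\<lambda>t. {t' \<in> ?T. ov t t'}) \<union> ?D \<times> ?D)"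
    by (rule card_mono[OF _ sub]) auto
  also have "\<dots> \<le> card (Sigma ?T (\<lambda>t. {t' \<in> ?T. ov t t'})) + card (?D \<times> ?D)"
    by (rule card_Un_le)
  also have "card (Sigma ?T (\<lambda>t. {t' \<in> ?T. ov t t'})) = (\<Sum>t\<in>?T. card {t' \<in> ?T. ov t t'})"
    by (rule card_SigmaI) auto
  also have "\<dots> \<le> (\<Sum>t\<in>?T. 27 * n)"
    by (rule sum_mono) (rule card_ov)
  also have "\<dots> = card ?T * (27 * n)" by simp
  also have "\<dots> \<le> n^3 * (27 * n)" using card_Trip by (intro mult_le_mono) auto
  also have "card (?D \<times> ?D) \<le> (2 * n^2) * (2 * n^2)"
    unfolding card_cartesian_product using card_diag by (intro mult_le_mono) auto
  finally show ?thesis by (simp add: power_def algebra_simps)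
qed

lemma sum_count_list: "(\<Sum>a\<in>set xs. real (count_list xs a) * g a) = sum_list (map g xs)"
proof (induction xs)
  case Nil then show ?case by simp
next
  case (Cons x xs)
  have c: "real (count_list (x # xs) a) * g a = real (count_list xs a) * g a + (if x = a then g a else 0)" for a
    by (simp add: algebra_simps)
  have d: "(\<Sum>a\<in>insert x (set xs). real (count_list xs a) * g a) = (\<Sum>a\<in>set xs. real (count_list xs a) * g a)"
  proof (cases "x \<in> set xs")
    case True then show ?thesis by (simp add: insert_absorb)
  next
    case False
    then have "count_list xs x = 0" by (simp add: count_list_0_iff)
    with False show ?thesis by simp
  qed
  have "(\<Sum>a\<in>set (x # xs). real (count_list (x # xs) a) * g a)
      = (\<Sum>a\<in>insert x (set xs). real (count_list xs a) * g a) + (\<Sum>a\<in>insert x (set xs). if x = a then g a else 0)"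
    by (simp only: c sum.distrib set_simps)
  also have "\<dots> = sum_list (map g (x # xs))"
    using Cons d by simp
  finally show ?case .
qed

lemma I_stat_sum:
  assumes n: "0 < n"
  shows "I_stat x n = (\<Sum>k<n. indicator {0..} (x k) * (emp_cdf x n (x k) - H_stat x n (x k))) / n"
proof -
  define xs where "xs = map x [0..<n]"
  define g where "g t = indicator {0..} t * (emp_cdf x n t - H_stat x n t)" for t
  have "xs \<noteq> []" using n by (simp add: xs_def)
  then have ne: "mset xs \<noteq> {#}" by simp
  have sz: "size (mset xs) = n" by (simp add: xs_def)
  have "I_stat x n = (\<integral>t. g t \<partial>measure_pmf (pmf_of_multiset (mset xs)))"
    unfolding I_stat_def emp_measure_def set_lebesgue_integral_def g_def xs_def by simp
  also have "\<dots> = (\<Sum>a\<in>set xs. g a * pmf (pmf_of_multiset (mset xs)) a)"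
    by (rule integral_measure_pmf_real) (use ne in auto)
  also have "\<dots> = (\<Sum>a\<in>set xs. count_list xs a * g a) / n"
    using ne sz by (simp add: count_mset sum_divide_distrib mult.commute)
  also have "(\<Sum>a\<in>set xs. count_list xs a * g a) = sum_list (map g xs)"
    by (rule sum_count_list)
  also have "\<dots> = (\<Sum>k<n. g (x k))"
    unfolding xs_def by (simp add: sum_set_upt_conv_sum_list_nat[symmetric] o_def atLeast0LessThan)
  finally show ?thesis by (simp add: g_def)
qed

lemma choose2_real: "real (n choose 2) = real n * (real n - 1) / 2"
proof (induction n)
  case 0 then show ?case by simp
next
  case (Suc n)
  have "Suc n choose Suc (Suc 0) = (n choose Suc 0) + (n choose Suc (Suc 0))"
    by (rule binomial_Suc_Suc)
  then have "Suc n choose 2 = n + (n choose 2)"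
    by (simp add: numeral_2_eq_2)
  then show ?case using Suc by (simp add: field_simps)
qed

lemma pair_sum: "(\<Sum>j<n. \<Sum>i<j. f i + f j) = (real n - 1) * (\<Sum>m<n. (f m :: real))"
proof (induction n)
  case 0 then show ?case by simp
next
  case (Suc n)
  have "(\<Sum>j<Suc n. \<Sum>i<j. f i + f j) = (\<Sum>j<n. \<Sum>i<j. f i + f j) + ((\<Sum>i<n. f i) + real n * f n)"
    by (simp add: sum.distrib)
  also have "\<dots> = (real (Suc n) - 1) * (\<Sum>m<Suc n. f m)"
    using Suc by (simp add: algebra_simps)
  finally show ?case .
qed

lemma gauss_real: "(\<Sum>j<n. real j) = real n * (real n - 1) / 2"
  by (induction n) (auto simp: field_simps)

lemma triple_sum_Trip:
  "(\<Sum>k<n. \<Sum>j<n. \<Sum>i<j. g (i, j, k)) = (\<Sum>t\<in>Trip n. g t)"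
proof -
  have "(\<Sum>k<n. \<Sum>j<n. \<Sum>i<j. g (i, j, k)) = (\<Sum>k<n. \<Sum>p\<in>(SIGMA j:{..<n}. {..<j}). g (snd p, fst p, k))"
    by (simp add: sum.Sigma split_beta)
  also have "\<dots> = (\<Sum>q\<in>(SIGMA k:{..<n}. (SIGMA j:{..<n}. {..<j})). g (snd (snd q), fst (snd q), fst q))"
    by (simp add: sum.Sigma split_beta)
  also have "\<dots> = (\<Sum>t\<in>Trip n. g t)"
  proof (rule sum.reindex_bij_witness[where i="\<lambda>t. (snd (snd t), fst (snd t), fst t)" and j="\<lambda>q. (snd (snd q), fst (snd q), fst q)"])
  qed (auto simp: Trip_def)
  finally show ?thesis .
qed

lemma sum_ne: "k < n \<Longrightarrow> (\<Sum>i<n. if i \<noteq> k then 1 else 0 :: real) = real n - 1"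
proof -
  assume k: "k < n"
  have "(\<Sum>i<n. if i \<noteq> k then 1 else 0 :: real) = (if k \<noteq> k then 1 else 0) + (\<Sum>i\<in>{..<n} - {k}. if i \<noteq> k then 1 else 0 :: real)"
    using k by (subst sum.remove[of _ k]) auto
  also have "\<dots> = (\<Sum>i\<in>{..<n} - {k}. 1)"
    using sum.cong[of "{..<n} - {k}" "{..<n} - {k}" "\<lambda>i. if i \<noteq> k then 1 else 0 :: real" "\<lambda>_. 1"] by auto
  also have "\<dots> = real n - 1" using k by (simp add: card_Diff_singleton)
  finally show ?thesis .
qed

lemma sum_F:
  fixes x :: "nat \<Rightarrow> real"
  assumes dist: "\<And>i k. i < n \<Longrightarrow> k < n \<Longrightarrow> i \<noteq> k \<Longrightarrow> x i \<noteq> x k"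
  shows "(\<Sum>k<n. \<Sum>i<n. if x i < x k then 1 else 0 :: real) = real n * (real n - 1) / 2"
proof -
  define Q where "Q = (\<Sum>k<n. \<Sum>i<n. if x i < x k then 1 else 0 :: real)"
  have Q2: "Q = (\<Sum>k<n. \<Sum>i<n. if x k < x i then 1 else 0 :: real)"
    unfolding Q_def by (rule sum.swap)
  have "Q + Q = (\<Sum>k<n. \<Sum>i<n. (if x i < x k then 1 else 0) + (if x k < x i then 1 else 0 :: real))"
    by (subst Q2) (simp add: Q_def sum.distrib)
  also have "\<dots> = (\<Sum>k<n. \<Sum>i<n. if i \<noteq> k then 1 else 0 :: real)"
  proof (intro sum.cong refl)
    fix k i assume "k \<in> {..<n}" "i \<in> {..<n}"
    then show "(if x i < x k then 1 else 0) + (if x k < x i then 1 else 0 :: real) = (if i \<noteq> k then 1 else 0)"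
    proof (cases "i = k")
      case True then show ?thesis by simp
    next
      case False
      then have "x i \<noteq> x k" using dist[of i k] \<open>k \<in> {..<n}\<close> \<open>i \<in> {..<n}\<close> by auto
      then show ?thesis using False by (cases "x i < x k") auto
    qed
  qed
  also have "\<dots> = (\<Sum>k<n. real n - 1)"
    by (intro sum.cong refl) (simp add: sum_ne)
  also have "\<dots> = real n * (real n - 1)" by simp
  finally show ?thesis unfolding Q_def by simp
qed

lemma hk_split: "hk a b c = rr l a b c + 1/2 + aa l a + aa l b + bb l c"
  unfolding rr_def by simp

lemma sum_hk:
  "(\<Sum>k<n. \<Sum>j<n. \<Sum>i<j. hk (x i) (x j) (x k))
   = (\<Sum>t\<in>Trip n. Rv l t x) + real n * (real n - 1) * (\<Sum>m<n. aa l (x m))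
     + real (n choose 2) * (real n / 2 + (\<Sum>k<n. bb l (x k)))"
proof -
  have "(\<Sum>k<n. \<Sum>j<n. \<Sum>i<j. hk (x i) (x j) (x k))
      = (\<Sum>k<n. \<Sum>j<n. \<Sum>i<j. rr l (x i) (x j) (x k)) + (\<Sum>k<n. \<Sum>j<n. \<Sum>i<j. aa l (x i) + aa l (x j))
        + (\<Sum>k<n. \<Sum>j<n. \<Sum>i<j. 1/2 + bb l (x k))"
    by (simp add: hk_split[of _ _ _ l] sum.distrib algebra_simps)
  also have "(\<Sum>k<n. \<Sum>j<n. \<Sum>i<j. rr l (x i) (x j) (x k)) = (\<Sum>t\<in>Trip n. Rv l t x)"
    using triple_sum_Trip[where n=n and g="\<lambda>t. Rv l t x"] by (simp add: Rv_def)
  also have "(\<Sum>k<n. \<Sum>j<n. \<Sum>i<j. aa l (x i) + aa l (x j)) = real n * ((real n - 1) * (\<Sum>m<n. aa l (x m)))"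
    by (simp add: pair_sum)
  also have "(\<Sum>k<n. \<Sum>j<n. \<Sum>i<j. 1/2 + bb l (x k)) = (\<Sum>k<n. (\<Sum>j<n. real j) * (1/2 + bb l (x k)))"
    by (simp add: sum_distrib_right)
  also have "\<dots> = (\<Sum>j<n. real j) * (\<Sum>k<n. 1/2 + bb l (x k))"
    by (simp add: sum_distrib_left)
  also have "\<dots> = real (n choose 2) * (real n / 2 + (\<Sum>k<n. bb l (x k)))"
    by (simp add: gauss_real choose2_real sum.distrib)
  finally show ?thesis by (simp add: algebra_simps)
qed

lemma I_decomp:
  fixes x :: "nat \<Rightarrow> real"
  assumes n: "2 \<le> n" and nonneg: "\<And>k. k < n \<Longrightarrow> 0 \<le> x k"
    and dist: "\<And>i k. i < n \<Longrightarrow> k < n \<Longrightarrow> i \<noteq> k \<Longrightarrow> x i \<noteq> x k"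
  shows "sqrt n * I_stat x n = - 1 / (2 * sqrt n) + 3 / sqrt n * (\<Sum>k<n. psi l (x k))
          - sqrt n / (n * real (n choose 2)) * (\<Sum>t\<in>Trip n. Rv l t x)"
proof -
  define C where "C = real (n choose 2)"
  define R where "R = (\<Sum>t\<in>Trip n. Rv l t x)"
  define Sa where "Sa = (\<Sum>m<n. aa l (x m))"
  define Sb where "Sb = (\<Sum>k<n. bb l (x k))"
  define Sp where "Sp = (\<Sum>k<n. psi l (x k))"
  have C: "C = real n * (real n - 1) / 2" unfolding C_def by (rule choose2_real)
  have npos: "real n \<ge> 2" using n by simp
  have Cpos: "C > 0" using npos by (simp add: C)
  have abp: "2 * Sa + Sb = - 3 * Sp"
    unfolding Sa_def Sb_def Sp_def by (simp add: sum_distrib_left sum.distrib[symmetric] two_a_b)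
  have sF: "(\<Sum>k<n. emp_cdf x n (x k)) = (real n - 1) / 2"
  proof -
    have "(\<Sum>k<n. emp_cdf x n (x k)) = (\<Sum>k<n. \<Sum>i<n. if x i < x k then 1 else 0 :: real) / n"
      unfolding emp_cdf_def by (simp add: sum_divide_distrib)
    also have "\<dots> = (real n - 1) / 2" using npos by (simp add: sum_F[OF dist])
    finally show ?thesis .
  qed
  have sH: "(\<Sum>k<n. H_stat x n (x k)) = (R + real n * (real n - 1) * Sa + C * (real n / 2 + Sb)) / C"
  proof -
    have "(\<Sum>k<n. H_stat x n (x k)) = (\<Sum>k<n. \<Sum>j<n. \<Sum>i<j. hk (x i) (x j) (x k)) / C"
      unfolding H_stat_def C_def hk_def by (simp add: sum_divide_distrib)
    then show ?thesis unfolding R_def Sa_def Sb_def C_def by (simp add: sum_hk[where n=n and x=x and l=l])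
  qed
  have "I_stat x n = (\<Sum>k<n. emp_cdf x n (x k) - H_stat x n (x k)) / n"
    using I_stat_sum[of n x] n nonneg by (simp add: indicator_def)
  also have "\<dots> = ((real n - 1) / 2 - (R + real n * (real n - 1) * Sa + C * (real n / 2 + Sb)) / C) / n"
    by (simp add: sum_subtractf sF sH)
  also have "\<dots> = (- 1/2 - R / C + 3 * Sp) / n"
  proof -
    define m where "m = real n * (real n - 1)"
    have m: "m > 0" "C = m / 2" using npos by (auto simp: m_def C)
    have "real n * (real n - 1) * Sa / C = 2 * Sa" unfolding m_def[symmetric] using m by (simp add: field_simps)
    then have "(R + real n * (real n - 1) * Sa + C * (real n / 2 + Sb)) / C = R / C + 2 * Sa + real n / 2 + Sb"
      using Cpos by (simp add: add_divide_distrib)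
    then have "(real n - 1) / 2 - (R + real n * (real n - 1) * Sa + C * (real n / 2 + Sb)) / C = - 1/2 - R / C + 3 * Sp"
      using abp by (simp add: field_simps)
    then show ?thesis by simp
  qed
  finally have I: "I_stat x n = (- 1/2 - R / C + 3 * Sp) / n" .
  have sq: "sqrt (real n) * sqrt (real n) = real n" by simp
  have sqpos: "sqrt (real n) > 0" using npos by simp
  have alg: "s * ((- 1/2 - R / C + 3 * Sp) / (s * s)) = - 1 / (2 * s) + 3 / s * Sp - s / (s * s * C) * R"
    if "s > 0" for s using that Cpos by (simp add: field_simps)
  show ?thesis unfolding I C_def[symmetric] R_def[symmetric] Sp_def[symmetric]
    using alg[OF sqpos] unfolding sq .
qed

lemma char_normal:
  assumes s: "0 < \<sigma>"
  shows "char (density lborel (normal_density 0 \<sigma>)) t = char std_normal_distribution (\<sigma> * t)"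
proof -
  interpret S: prob_space std_normal_distribution
    using prob_space_normal_density by simp
  have d: "distributed std_normal_distribution lborel (\<lambda>x. x) (normal_density 0 1)"
    unfolding distributed_def by (simp add: distr_id2)
  have "distributed std_normal_distribution lborel (\<lambda>x. 0 + \<sigma> * x) (normal_density (0 + \<sigma> * 0) (\<bar>\<sigma>\<bar> * 1))"
    by (rule S.normal_density_affine[OF d]) (use s in auto)
  then have "distributed std_normal_distribution lborel (\<lambda>x. \<sigma> * x) (normal_density 0 \<sigma>)"
    using s by simp
  then have eq: "distr std_normal_distribution lborel (\<lambda>x. \<sigma> * x) = density lborel (normal_density 0 \<sigma>)"
    by (rule distributed_distr_eq_density)
  have "char (density lborel (normal_density 0 \<sigma>)) t = (CLINT x|distr std_normal_distribution lborel (\<lambda>x. \<sigma> * x). iexp (t * x))"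
    unfolding char_def eq ..
  also have "\<dots> = (CLINT x|std_normal_distribution. iexp (t * (\<sigma> * x)))"
    by (rule integral_distr) auto
  also have "\<dots> = char std_normal_distribution (\<sigma> * t)"
    unfolding char_def by (simp add: ac_simps)
  finally show ?thesis .
qed

lemma iexp_lip: "cmod (iexp a - iexp b) \<le> \<bar>a - b\<bar>"
proof -
  have "iexp a - iexp b = iexp b * (iexp (a - b) - 1)"
    by (simp add: algebra_simps exp_add[symmetric])
  then have "cmod (iexp a - iexp b) = cmod (iexp (a - b) - 1)"
    by (simp add: norm_mult)
  also have "\<dots> \<le> \<bar>a - b\<bar>"
    using iexp_approx1[of "a - b" 0] by simp
  finally show ?thesis .
qed

context ES
begin

lemma AE_X_nonneg: "AE \<omega> in M. \<forall>k. 0 \<le> X k \<omega>"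
proof (subst AE_all_countable, intro allI)
  fix k
  have "AE x in distr M borel (X k). 0 \<le> x" unfolding distr_X by (rule AE_mu_nonneg)
  then show "AE \<omega> in M. 0 \<le> X k \<omega>" by (rule AE_distrD[rotated]) simp
qed

lemma AE_X_neq: "i \<noteq> k \<Longrightarrow> AE \<omega> in M. X i \<omega> \<noteq> X k \<omega>"
proof -
  assume ik: "i \<noteq> k"
  define G where "G x v = (if x = v k then 1 else 0 :: real)" for x and v :: "nat \<Rightarrow> real"
  have Gm: "(\<lambda>p. G (fst p) (snd p)) \<in> borel_measurable (borel \<Otimes>\<^sub>M PiM {k} (\<lambda>_. borel))"
    unfolding G_def by measurable
  have "expectation (\<lambda>\<omega>. G (X i \<omega>) (restrict (\<lambda>j. X j \<omega>) {k})) = (\<integral>x. expectation (\<lambda>\<omega>. G x (restrict (\<lambda>j. X j \<omega>) {k})) \<partial>mu)"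
    by (rule FE[OF _ _ Gm, where B=1]) (use ik in \<open>auto simp: G_def\<close>)
  also have "\<dots> = (\<integral>x. 0 \<partial>mu)"
  proof (rule Bochner_Integration.integral_cong[OF refl])
    fix x
    have "expectation (\<lambda>\<omega>. G x (restrict (\<lambda>j. X j \<omega>) {k})) = expectation (\<lambda>\<omega>. indicator {x} (X k \<omega>) :: real)"
      by (rule arg_cong[where f=expectation]) (auto simp: G_def indicator_def)
    also have "\<dots> = (\<integral>y. indicator {x} y \<partial>mu)"
      by (rule EX) simp
    also have "\<dots> = (\<integral>y. 0 \<partial>mu)"
      by (rule integral_cong_AE) (use AE_mu_neq[of x] in \<open>auto simp: indicator_def\<close>)
    finally show "expectation (\<lambda>\<omega>. G x (restrict (\<lambda>j. X j \<omega>) {k})) = 0" by simp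
  qed
  finally have e0: "expectation (\<lambda>\<omega>. G (X i \<omega>) (restrict (\<lambda>j. X j \<omega>) {k})) = 0" by simp
  have int: "integrable M (\<lambda>\<omega>. G (X i \<omega>) (restrict (\<lambda>j. X j \<omega>) {k}))"
    by (rule integrable_const_bound[where B=1]) (auto simp: G_def)
  have "AE \<omega> in M. G (X i \<omega>) (restrict (\<lambda>j. X j \<omega>) {k}) = 0"
    using integral_nonneg_eq_0_iff_AE[OF int] e0 by (auto simp: G_def)
  then show ?thesis by eventually_elim (auto simp: G_def split: if_splits)
qed

lemma AE_X_dist: "AE \<omega> in M. \<forall>i k. i \<noteq> k \<longrightarrow> X i \<omega> \<noteq> X k \<omega>"
proof (subst AE_all_countable, intro allI, subst AE_all_countable, intro allI)
  fix i k :: nat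
  show "AE \<omega> in M. i \<noteq> k \<longrightarrow> X i \<omega> \<noteq> X k \<omega>"
    by (cases "i = k") (auto intro: AE_X_neq)
qed

definition Zf :: "nat \<Rightarrow> 'a \<Rightarrow> real" where "Zf n \<omega> = sqrt (real n) * I_stat (\<lambda>i. X i \<omega>) n"
definition Yf :: "nat \<Rightarrow> 'a \<Rightarrow> real" where "Yf n \<omega> = 3 / sqrt (real n) * (\<Sum>k<n. psi l (X k \<omega>))"
definition Rs :: "nat \<Rightarrow> 'a \<Rightarrow> real" where "Rs n \<omega> = (\<Sum>t\<in>Trip n. Rv l t (\<lambda>i. X i \<omega>))"
definition cn :: "nat \<Rightarrow> real" where "cn n = sqrt (real n) / (real n * real (n choose 2))"

lemma Zf_meas[measurable]: "Zf n \<in> borel_measurable M"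
proof (cases "n = 0")
  case True then have "Zf n = (\<lambda>_. 0)" by (simp add: Zf_def fun_eq_iff)
  then show ?thesis by simp
next
  case False
  then have "Zf n = (\<lambda>\<omega>. sqrt (real n) * ((\<Sum>k<n. indicator {0..} (X k \<omega>) * (emp_cdf (\<lambda>i. X i \<omega>) n (X k \<omega>) - H_stat (\<lambda>i. X i \<omega>) n (X k \<omega>))) / n))"
    by (simp add: Zf_def I_stat_sum fun_eq_iff)
  also have "\<dots> \<in> borel_measurable M"
    unfolding emp_cdf_def H_stat_def by measurable
  finally show ?thesis .
qed

lemma Yf_meas[measurable]: "Yf n \<in> borel_measurable M"
  unfolding Yf_def by measurable

lemma Rs_meas[measurable]: "Rs n \<in> borel_measurable M"
  unfolding Rs_def by measurable

lemma AE_Z: "2 \<le> n \<Longrightarrow> AE \<omega> in M. Zf n \<omega> = Yf n \<omega> - 1 / (2 * sqrt (real n)) - cn n * Rs n \<omega>"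
proof -
  assume n: "2 \<le> n"
  show ?thesis
    using AE_X_nonneg AE_X_dist
  proof eventually_elim
    fix \<omega> assume a: "\<forall>k. 0 \<le> X k \<omega>" "\<forall>i k. i \<noteq> k \<longrightarrow> X i \<omega> \<noteq> X k \<omega>"
    have "sqrt (real n) * I_stat (\<lambda>i. X i \<omega>) n = - 1 / (2 * sqrt n) + 3 / sqrt n * (\<Sum>k<n. psi l (X k \<omega>))
          - sqrt n / (n * real (n choose 2)) * (\<Sum>t\<in>Trip n. Rv l t (\<lambda>i. X i \<omega>))"
      by (rule I_decomp[OF n]) (use a in auto)
    then show "Zf n \<omega> = Yf n \<omega> - 1 / (2 * sqrt (real n)) - cn n * Rs n \<omega>"
      by (simp add: Zf_def Yf_def Rs_def cn_def)
  qed
qed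

lemma L1_L2:
  assumes W[measurable]: "W \<in> borel_measurable M" and B: "\<And>\<omega>. \<bar>W \<omega>\<bar> \<le> B"
  shows "expectation (\<lambda>\<omega>. \<bar>W \<omega>\<bar>) \<le> sqrt (expectation (\<lambda>\<omega>. (W \<omega>)^2))"
proof -
  have i1: "integrable M (\<lambda>\<omega>. \<bar>W \<omega>\<bar>)"
    by (rule integrable_const_bound[where B=B]) (auto simp: B)
  have i2: "integrable M (\<lambda>\<omega>. (\<bar>W \<omega>\<bar>)^2)"
  proof (rule integrable_const_bound[where B="B^2"])
    show "AE x in M. norm ((\<bar>W x\<bar>)^2) \<le> B^2"
    proof (rule AE_I2)
      fix x
      have h: "(\<bar>W x\<bar>)^2 \<le> B^2" by (rule power_mono[OF B]) simp
      then show "norm ((\<bar>W x\<bar>)^2) \<le> B^2" by simp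
    qed
  qed simp
  have "0 \<le> variance (\<lambda>\<omega>. \<bar>W \<omega>\<bar>)" by simp
  also have "variance (\<lambda>\<omega>. \<bar>W \<omega>\<bar>) = expectation (\<lambda>\<omega>. (\<bar>W \<omega>\<bar>)^2) - (expectation (\<lambda>\<omega>. \<bar>W \<omega>\<bar>))^2"
    by (rule variance_eq[OF i1 i2])
  finally have "(expectation (\<lambda>\<omega>. \<bar>W \<omega>\<bar>))^2 \<le> expectation (\<lambda>\<omega>. (W \<omega>)^2)" by simp
  moreover have "0 \<le> expectation (\<lambda>\<omega>. \<bar>W \<omega>\<bar>)" by simp
  ultimately show ?thesis by (simp add: real_le_rsqrt)
qed

lemma Rs_bound: "\<bar>Rs n \<omega>\<bar> \<le> 3 * card (Trip n)"
proof -
  have "\<bar>Rs n \<omega>\<bar> \<le> (\<Sum>t\<in>Trip n. \<bar>Rv l t (\<lambda>i. X i \<omega>)\<bar>)"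
    unfolding Rs_def by (rule sum_abs)
  also have "\<dots> \<le> (\<Sum>t\<in>Trip n. 3)"
    by (rule sum_mono) (use l_pos in \<open>auto intro: Rv_bound\<close>)
  finally show ?thesis by simp
qed

lemma E_Rs: "expectation (\<lambda>\<omega>. \<bar>Rs n \<omega>\<bar>) \<le> sqrt 279 * (real n)^2"
proof -
  have "expectation (\<lambda>\<omega>. \<bar>Rs n \<omega>\<bar>) \<le> sqrt (expectation (\<lambda>\<omega>. (Rs n \<omega>)^2))"
    by (rule L1_L2[OF _ Rs_bound]) simp
  also have "expectation (\<lambda>\<omega>. (Rs n \<omega>)^2) \<le> 9 * card {p \<in> Trip n \<times> Trip n. bad (fst p) (snd p)}"
    unfolding Rs_def by (rule ESQ) simp
  also have "\<dots> \<le> 9 * (31 * (real n)^4)"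
    using card_bad[of n] by (simp del: of_nat_power add: of_nat_power[symmetric])
  finally have "expectation (\<lambda>\<omega>. \<bar>Rs n \<omega>\<bar>) \<le> sqrt (279 * ((real n)^2)^2)"
    by (simp add: power_mult[symmetric])
  also have "\<dots> = sqrt 279 * (real n)^2"
    by (subst real_sqrt_mult, subst real_sqrt_abs) simp
  finally show ?thesis .
qed

end

context ES
begin

definition sig :: real where "sig = sqrt (9 * (11 / 3780))"

lemma sig_pos: "0 < sig" unfolding sig_def by simp

lemma sig_sq: "sig^2 = 9 * (11 / 3780)" unfolding sig_def by simp

lemma char_distr: "f \<in> borel_measurable M \<Longrightarrow> char (distr M borel f) t = (CLINT \<omega>|M. iexp (t * f \<omega>))"
  unfolding char_def by (rule integral_distr) auto

lemma CLT_Y: "(\<lambda>n. char (distr M borel (Yf n)) t) \<longlonglongrightarrow> char std_normal_distribution (sig * t)"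
proof -
  define \<xi> where "\<xi> k \<omega> = 3 * psi l (X k \<omega>)" for k \<omega>
  have \<xi>m[measurable]: "\<xi> k \<in> borel_measurable M" for k unfolding \<xi>_def by measurable
  have ind: "indep_vars (\<lambda>i. borel) \<xi> UNIV"
    unfolding \<xi>_def by (rule indep_vars_compose2[OF indep, where Y="\<lambda>i x. 3 * psi l x"]) simp
  have mean: "expectation (\<xi> n) = 0" for n
  proof -
    have "expectation (\<xi> n) = integral\<^sup>L mu (\<lambda>x. 3 * psi l x)"
      unfolding \<xi>_def by (rule EX) simp
    then show ?thesis by (simp add: int_psi)
  qed
  have bnd: "\<bar>\<xi> n \<omega>\<bar> \<le> 3" for n \<omega>
    using psi_bound[of l "X n \<omega>"] l_pos by (simp add: \<xi>_def abs_mult)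
  have sqint: "integrable M (\<lambda>x. (\<xi> n x)\<^sup>2)" for n
  proof (rule integrable_const_bound[where B=9])
    show "AE x in M. norm ((\<xi> n x)\<^sup>2) \<le> 9"
    proof (rule AE_I2)
      fix x
      have "(\<bar>\<xi> n x\<bar>)^2 \<le> 3^2" by (rule power_mono[OF bnd]) simp
      then show "norm ((\<xi> n x)\<^sup>2) \<le> 9" by simp
    qed
  qed simp
  have var: "variance (\<xi> n) = sig\<^sup>2" for n
  proof -
    have "variance (\<xi> n) = expectation (\<lambda>\<omega>. (\<xi> n \<omega>)^2)" by (simp add: mean)
    also have "\<dots> = integral\<^sup>L mu (\<lambda>x. 9 * (psi l x)^2)"
      unfolding \<xi>_def by (subst EX[symmetric]) (simp_all add: power_mult_distrib)
    also have "\<dots> = 9 * (11 / 3780)" by (simp add: int_psi2)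
    finally show ?thesis by (simp add: sig_sq)
  qed
  have dis: "distr M borel (\<xi> n) = distr mu borel (\<lambda>x. 3 * psi l x)" for n
  proof -
    have "distr M borel (\<xi> n) = distr (distr M borel (X n)) borel (\<lambda>x. 3 * psi l x)"
      unfolding \<xi>_def by (subst distr_distr) (auto simp: o_def)
    then show ?thesis by (simp add: distr_X)
  qed
  have clt: "weak_conv_m (\<lambda>n. distr M borel (\<lambda>x. (\<Sum>i<n. \<xi> i x) / sqrt (real n * sig\<^sup>2))) std_normal_distribution"
    by (rule central_limit_theorem_zero_mean[OF ind mean sig_pos sqint var dis])
  have conv: "(\<lambda>n. char (distr M borel (\<lambda>x. (\<Sum>i<n. \<xi> i x) / sqrt (real n * sig\<^sup>2))) (sig * t)) \<longlonglongrightarrow> char std_normal_distribution (sig * t)"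
    by (rule levy_continuity1[OF _ real_dist_normal_dist clt]) (rule real_distribution_distr, simp)
  have eq: "char (distr M borel (\<lambda>x. (\<Sum>i<n. \<xi> i x) / sqrt (real n * sig\<^sup>2))) (sig * t) = char (distr M borel (Yf n)) t" for n
  proof -
    have "sig * t * ((\<Sum>i<n. \<xi> i \<omega>) / sqrt (real n * sig\<^sup>2)) = t * Yf n \<omega>" for \<omega>
    proof -
      have "sqrt (real n * sig\<^sup>2) = sqrt (real n) * sig" using sig_pos by (simp add: real_sqrt_mult)
      then show ?thesis using sig_pos
        by (simp add: Yf_def \<xi>_def sum_distrib_left[symmetric] field_simps)
    qed
    then show ?thesis by (simp add: char_distr)
  qed
  show ?thesis using conv unfolding eq .
qed

lemma lim_bound: "(\<lambda>n. 1 / (2 * sqrt (real n)) + cn n * (sqrt 279 * (real n)^2)) \<longlonglongrightarrow> 0"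
proof -
  have "(\<lambda>n. 1 / (2 * sqrt (real n)) + sqrt (real n) / (real n * (real n * (real n - 1) / 2)) * (sqrt 279 * (real n)^2)) \<longlonglongrightarrow> 0"
    by real_asymp
  then show ?thesis by (simp add: cn_def choose2_real)
qed

lemma diff_bound:
  assumes n: "2 \<le> n"
  shows "cmod (char (distr M borel (Zf n)) t - char (distr M borel (Yf n)) t) \<le> \<bar>t\<bar> * (1 / (2 * sqrt (real n)) + cn n * (sqrt 279 * (real n)^2))"
proof -
  have cn0: "0 \<le> cn n" by (simp add: cn_def)
  have iz: "integrable M (\<lambda>\<omega>. iexp (t * Zf n \<omega>))" by (rule integrable_iexp) auto
  have iy: "integrable M (\<lambda>\<omega>. iexp (t * Yf n \<omega>))" by (rule integrable_iexp) auto
  define g where "g \<omega> = \<bar>t\<bar> * (1 / (2 * sqrt (real n)) + cn n * \<bar>Rs n \<omega>\<bar>)" for \<omega>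
  have ig: "integrable M g"
  proof (rule integrable_const_bound[where B="\<bar>t\<bar> * (1 / (2 * sqrt (real n)) + cn n * (3 * card (Trip n)))"])
    show "AE x in M. norm (g x) \<le> \<bar>t\<bar> * (1 / (2 * sqrt (real n)) + cn n * (3 * card (Trip n)))"
    proof (rule AE_I2)
      fix x
      have "cn n * \<bar>Rs n x\<bar> \<le> cn n * (3 * card (Trip n))"
        by (rule mult_left_mono[OF Rs_bound cn0])
      then show "norm (g x) \<le> \<bar>t\<bar> * (1 / (2 * sqrt (real n)) + cn n * (3 * card (Trip n)))"
        unfolding g_def using cn0 by (simp add: abs_mult mult_left_mono)
    qed
  qed (unfold g_def, measurable)
  have if1: "integrable M (\<lambda>\<omega>. cmod (iexp (t * Zf n \<omega>) - iexp (t * Yf n \<omega>)))"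
    using iz iy by auto
  have "char (distr M borel (Zf n)) t - char (distr M borel (Yf n)) t = (CLINT \<omega>|M. iexp (t * Zf n \<omega>) - iexp (t * Yf n \<omega>))"
    unfolding char_distr[OF Zf_meas] char_distr[OF Yf_meas] by (rule Bochner_Integration.integral_diff[OF iz iy, symmetric])
  then have "cmod (char (distr M borel (Zf n)) t - char (distr M borel (Yf n)) t) \<le> expectation (\<lambda>\<omega>. cmod (iexp (t * Zf n \<omega>) - iexp (t * Yf n \<omega>)))"
    by (simp add: integral_norm_bound)
  also have "\<dots> \<le> expectation g"
  proof (rule integral_mono_AE[OF if1 ig])
    show "AE \<omega> in M. cmod (iexp (t * Zf n \<omega>) - iexp (t * Yf n \<omega>)) \<le> g \<omega>"
      using AE_Z[OF n]
    proof eventually_elim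
      fix \<omega> assume z: "Zf n \<omega> = Yf n \<omega> - 1 / (2 * sqrt (real n)) - cn n * Rs n \<omega>"
      have "cmod (iexp (t * Zf n \<omega>) - iexp (t * Yf n \<omega>)) \<le> \<bar>t * Zf n \<omega> - t * Yf n \<omega>\<bar>"
        by (rule iexp_lip)
      also have "\<dots> = \<bar>t\<bar> * \<bar>1 / (2 * sqrt (real n)) + cn n * Rs n \<omega>\<bar>"
        unfolding z by (simp add: abs_mult[symmetric] algebra_simps abs_minus_commute)
      also have "\<dots> \<le> g \<omega>"
        unfolding g_def using cn0 by (intro mult_left_mono) (auto simp: abs_mult intro: order.trans[OF abs_triangle_ineq])
      finally show "cmod (iexp (t * Zf n \<omega>) - iexp (t * Yf n \<omega>)) \<le> g \<omega>" .
    qed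
  qed
  also have "expectation g = \<bar>t\<bar> * (1 / (2 * sqrt (real n)) + cn n * expectation (\<lambda>\<omega>. \<bar>Rs n \<omega>\<bar>))"
  proof -
    have "integrable M (\<lambda>\<omega>. \<bar>Rs n \<omega>\<bar>)"
      by (rule integrable_const_bound[where B="3 * card (Trip n)"]) (use Rs_bound[of n] in \<open>auto intro!: AE_I2\<close>)
    then show ?thesis unfolding g_def using prob_space by simp
  qed
  also have "\<dots> \<le> \<bar>t\<bar> * (1 / (2 * sqrt (real n)) + cn n * (sqrt 279 * (real n)^2))"
    using E_Rs[of n] cn0 by (intro mult_left_mono add_left_mono mult_left_mono) auto
  finally show ?thesis .
qed

lemma char_Z: "(\<lambda>n. char (distr M borel (Zf n)) t) \<longlonglongrightarrow> char std_normal_distribution (sig * t)"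
proof -
  have d: "(\<lambda>n. char (distr M borel (Zf n)) t - char (distr M borel (Yf n)) t) \<longlonglongrightarrow> 0"
  proof (rule Lim_null_comparison)
    show "eventually (\<lambda>n. norm (char (distr M borel (Zf n)) t - char (distr M borel (Yf n)) t) \<le> \<bar>t\<bar> * (1 / (2 * sqrt (real n)) + cn n * (sqrt 279 * (real n)^2))) sequentially"
      using eventually_ge_at_top[of 2] by eventually_elim (simp add: diff_bound)
    show "(\<lambda>n. \<bar>t\<bar> * (1 / (2 * sqrt (real n)) + cn n * (sqrt 279 * (real n)^2))) \<longlonglongrightarrow> 0"
      using tendsto_mult_right_zero[OF lim_bound, of "\<bar>t\<bar>"] by simp
  qed
  have "(\<lambda>n. (char (distr M borel (Zf n)) t - char (distr M borel (Yf n)) t) + char (distr M borel (Yf n)) t) \<longlonglongrightarrow> 0 + char std_normal_distribution (sig * t)"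
    by (rule tendsto_add[OF d CLT_Y])
  then show ?thesis by simp
qed

end

theorem theorem4:
  fixes M :: "'a measure" and X :: "nat \<Rightarrow> 'a \<Rightarrow> real" and l :: real
  assumes "prob_space M"
    and "l > 0"
    and "prob_space.indep_vars M (\<lambda>i. borel) X UNIV"
    and "\<And>i. distributed M lborel (X i) (exponential_density l)"
  shows "weak_conv_m (\<lambda>n. distr M borel (\<lambda>\<omega>. sqrt (real n) * I_stat (\<lambda>i. X i \<omega>) n))
           (density lborel (normal_density 0 (sqrt (9 * (11 / 3780)))))"
proof -
  interpret ES M X l
    by (rule ES.intro[OF assms(1)], rule ES_axioms.intro) (use assms in auto)
  have eqZ: "(\<lambda>\<omega>. sqrt (real n) * I_stat (\<lambda>i. X i \<omega>) n) = Zf n" for n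
    by (simp add: Zf_def fun_eq_iff)
  have rd: "real_distribution (density lborel (normal_density 0 (sqrt (9 * (11 / 3780)))))"
    using prob_space_normal_density by (auto simp: real_distribution_def real_distribution_axioms_def)
  show ?thesis unfolding eqZ
  proof (rule levy_continuity[OF _ rd])
    show "real_distribution (distr M borel (Zf n))" for n by simp
    fix t
    have "char (density lborel (normal_density 0 (sqrt (9 * (11 / 3780))))) t = char std_normal_distribution (sig * t)"
      unfolding sig_def by (rule char_normal) simp
    then show "(\<lambda>n. char (distr M borel (Zf n)) t) \<longlonglongrightarrow> char (density lborel (normal_density 0 (sqrt (9 * (11 / 3780))))) t"
      using char_Z[of t] by simp
  qed
qed

end
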